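(* Let $M\in\mathrm{M}_n(\mathbb{K})$ and let $\mathbb{K}^n=V_1\oplus\cdots\oplus V_t$ where each $V_i$ is a $\mathbb{K}$-subspace with $V_iM^t\subseteq V_i$ such that the endomorphism $v\mapsto vM^t$ of $V_i$ is cyclic with minimal polynomial $\Theta_i\in\mathbb{K}[x]$; put $d_i=\deg\Theta_i$. Let $P\in\mathbb{L}[x]$ and $\mathcal{C}=\ker(P(M))=\{c\in\mathbb{L}^n : cP(M)^t=0\}$. For each $i$ let $\mathcal{C}_i\subseteq\mathbb{L}^{d_i}$ be the $\Theta_i$-polynomial code with generator polynomial $\Theta_i/\gcd(P,\Theta_i)$, and let $\Lambda=\{i : \gcd(P,\Theta_i)\neq1\}$ (gcd taken monic in $\mathbb{L}[x]$). Then: $k_i:=\dim_{\mathbb{L}}\mathcal{C}_i=\deg\gcd(P,\Theta_i)$ for all $i$, and $M_{r_i}(\mathcal{C}_i)\le\deg(\Theta_i)-\deg\gcd(P,\Theta_i)+r_i$ for all $r_i\in\{1,\dots,k_i\}$; $k:=\dim_{\mathbb{L}}\mathcal{C}=\sum_{i\in\Lambda}\deg\gcd(P,\Theta_i)$; and for all $r\in\{1,\dots,k\}$, $$M_r(\mathcal{C})=\min_{\substack{\sum_{i\in\Lambda}r_i=r\\ r_i\in\{0,\dots,k_i\}}}\sum_{i\in\Lambda}M_{r_i}(\mathcal{C}_i)\le\min_{\substack{\sum_{i\in\Lambda}r_i=r\\ r_i\in\{0,\dots,k_i\}}}\Big(\sum_{i\in\Lambda,\ r_i\neq0}(\deg\Theta_i-\deg\gcd(P,\Theta_i))\Big)+r.$$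 In particular $M_1(\mathcal{C})=\min_{i\in\Lambda}M_1(\mathcal{C}_i)$ and $M_k(\mathcal{C})=\sum_{i\in\Lambda}M_{k_i}(\mathcal{C}_i)\le\sum_{i\in\Lambda}\deg\Theta_i$.
   Context: Let $\mathbb{L}/\mathbb{K}$ be a field extension of finite degree $m$, and $n\ge 1$ an integer with $m\ge n$ (standing assumption). Vectors are row vectors. Fix a $\mathbb{K}$-basis $\mathcal{B}$ of $\mathbb{L}$; for $c=(c_1,\dots,c_n)\in\mathbb{L}^n$ let $M_{\mathcal{B}}(c)$ be the $m\times n$ matrix over $\mathbb{K}$ whose $j$-th column is the coordinate vector of $c_j$ in $\mathcal{B}$; $\mathrm{Rsupp}(c)\subseteq\mathbb{K}^n$ is its $\mathbb{K}$-row space and $\mathrm{wt}_R(c)=\dim_{\mathbb{K}}\mathrm{Rsupp}(c)$. For an $\mathbb{L}$-subspace $\mathcal{D}$, $\mathrm{Rsupp}(\mathcal{D})$ is the $\mathbb{K}$-span of all $\mathrm{Rsupp}(d)$, $d\in\mathcal{D}$, and $\mathrm{wt}_R(\mathcal{D})=\dim_{\mathbb{K}}\mathrm{Rsupp}(\mathcal{D})$. A linear $[n,k]$ code is a $k$-dimensional $\mathbb{L}$-subspace $\mathcal{C}\subseteq\mathbb{L}^n$; $M_r(\mathcal{C})=\min\{\mathrm{wt}_R(\mathcal{D}):\mathcal{D}\subseteq\mathcal{C},\dim_{\mathbb{L}}\mathcal{D}=r\}$ for $1\le r\le k$, and $M_0(\mathcal{C})=0$. An endomorphism $u$ of a vector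 space $V$ of dimension $d$ is cyclic if there is $v$ with $(v,u(v),\dots,u^{d-1}(v))$ a basis. For a monic $\Theta=x^d+a_{d-1}x^{d-1}+\dots+a_0\in\mathbb{K}[x]$, its companion matrix $C_\Theta\in\mathrm{M}_d(\mathbb{K})$ has ones on the subdiagonal, last column $(-a_0,\dots,-a_{d-1})^t$, and zeros elsewhere. The $\Theta$-polynomial code with generator polynomial $g$ (a monic divisor of $\Theta$ in $\mathbb{L}[x]$) is $\{w\,g(C_\Theta)^tQ(C_\Theta)^t : Q\in\mathbb{L}[x]\}\subseteq\mathbb{L}^d$ with $w=(1,0,\dots,0)$; equivalently, the set of coefficient vectors $(b_0,\dots,b_{d-1})$ of the polynomials of degree $<d$ representing elements of the ideal $(\bar g)$ of $\mathbb{L}[x]/(\Theta)$. *)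

theory Defs
  imports Main "HOL-Library.Function_Algebras" "HOL-Computational_Algebra.Polynomial_Factorial" "HOL-Computational_Algebra.Euclidean_Algorithm"
begin

text \<open>Vectors of length n over a field are functions nat => 'a vanishing from index n on;
  n x n matrices are functions nat => nat => 'a (only entries below n matter).\<close>

definition vecs :: "nat \<Rightarrow> (nat \<Rightarrow> 'a::zero) set" where
  "vecs n = {v. \<forall>j\<ge>n. v j = 0}"

definition sc :: "'a::field \<Rightarrow> (nat \<Rightarrow> 'a) \<Rightarrow> (nat \<Rightarrow> 'a)" where
  "sc a v = (\<lambda>j. a * v j)"

definition scK :: "('k \<Rightarrow> 'l::field) \<Rightarrow> 'k \<Rightarrow> (nat \<Rightarrow> 'l) \<Rightarrow> (nat \<Rightarrow> 'l)" where
  "scK emb a v = (\<lambda>j. emb a * v j)"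

text \<open>emb : K -> L is a field embedding (K is then identified with a subfield of L).\<close>
definition field_emb :: "('k::field \<Rightarrow> 'l::field) \<Rightarrow> bool" where
  "field_emb emb \<longleftrightarrow> (\<forall>a b. emb (a + b) = emb a + emb b) \<and> (\<forall>a b. emb (a * b) = emb a * emb b)
      \<and> emb 1 = 1"

definition is_K_basis :: "('k::field \<Rightarrow> 'l::field) \<Rightarrow> (nat \<Rightarrow> 'l) \<Rightarrow> nat \<Rightarrow> bool" where
  "is_K_basis emb b m \<longleftrightarrow>
     (\<forall>x. \<exists>!a. (\<forall>j\<ge>m. a j = 0) \<and> x = (\<Sum>j<m. emb (a j) * b j))"

definition coord :: "('k::field \<Rightarrow> 'l::field) \<Rightarrow> (nat \<Rightarrow> 'l) \<Rightarrow> nat \<Rightarrow> 'l \<Rightarrow> nat \<Rightarrow> 'k" where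
  "coord emb b m x = (THE a. (\<forall>j\<ge>m. a j = 0) \<and> x = (\<Sum>j<m. emb (a j) * b j))"

text \<open>Rsupp(c) for c in L^n: the K-row space of the m x n matrix M_B(c), whose (j,l) entry is the
  j-th coordinate of c_l.\<close>
definition Rsupp :: "('k::field \<Rightarrow> 'l::field) \<Rightarrow> (nat \<Rightarrow> 'l) \<Rightarrow> nat \<Rightarrow> nat \<Rightarrow> (nat \<Rightarrow> 'l) \<Rightarrow> (nat \<Rightarrow> 'k) set" where
  "Rsupp emb b m n c = module.span sc
     {(\<lambda>l. if l < n then coord emb b m (c l) j else 0) | j. j < m}"

definition wtR :: "('k::field \<Rightarrow> 'l::field) \<Rightarrow> (nat \<Rightarrow> 'l) \<Rightarrow> nat \<Rightarrow> nat \<Rightarrow> (nat \<Rightarrow> 'l) \<Rightarrow> nat" where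
  "wtR emb b m n c = vector_space.dim (sc :: 'k \<Rightarrow> _) (Rsupp emb b m n c)"

definition Rsupp_sp :: "('k::field \<Rightarrow> 'l::field) \<Rightarrow> (nat \<Rightarrow> 'l) \<Rightarrow> nat \<Rightarrow> nat \<Rightarrow> (nat \<Rightarrow> 'l) set \<Rightarrow> (nat \<Rightarrow> 'k) set" where
  "Rsupp_sp emb b m n D = module.span sc (\<Union>d\<in>D. Rsupp emb b m n d)"

definition wtR_sp :: "('k::field \<Rightarrow> 'l::field) \<Rightarrow> (nat \<Rightarrow> 'l) \<Rightarrow> nat \<Rightarrow> nat \<Rightarrow> (nat \<Rightarrow> 'l) set \<Rightarrow> nat" where
  "wtR_sp emb b m n D = vector_space.dim (sc :: 'k \<Rightarrow> _) (Rsupp_sp emb b m n D)"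

definition Mr :: "('k::field \<Rightarrow> 'l::field) \<Rightarrow> (nat \<Rightarrow> 'l) \<Rightarrow> nat \<Rightarrow> nat \<Rightarrow> (nat \<Rightarrow> 'l) set \<Rightarrow> nat \<Rightarrow> nat" where
  "Mr emb b m n C r = (if r = 0 then 0 else
     Min {wtR_sp emb b m n D | D. module.subspace (sc :: 'l \<Rightarrow> _) D \<and> D \<subseteq> C
                                   \<and> vector_space.dim (sc :: 'l \<Rightarrow> _) D = r})"

definition mat_mult :: "nat \<Rightarrow> (nat \<Rightarrow> nat \<Rightarrow> 'a::comm_ring_1) \<Rightarrow> (nat \<Rightarrow> nat \<Rightarrow> 'a) \<Rightarrow> nat \<Rightarrow> nat \<Rightarrow> 'a" where
  "mat_mult n A B = (\<lambda>i j. \<Sum>k<n. A i k * B k j)"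

definition mat_id :: "nat \<Rightarrow> nat \<Rightarrow> 'a::comm_ring_1" where
  "mat_id = (\<lambda>i j. if i = j then 1 else 0)"

primrec mat_pow :: "nat \<Rightarrow> (nat \<Rightarrow> nat \<Rightarrow> 'a::comm_ring_1) \<Rightarrow> nat \<Rightarrow> nat \<Rightarrow> nat \<Rightarrow> 'a" where
  "mat_pow n A 0 = mat_id"
| "mat_pow n A (Suc k) = mat_mult n (mat_pow n A k) A"

definition poly_mat :: "nat \<Rightarrow> 'a::comm_ring_1 poly \<Rightarrow> (nat \<Rightarrow> nat \<Rightarrow> 'a) \<Rightarrow> nat \<Rightarrow> nat \<Rightarrow> 'a" where
  "poly_mat n p A = (\<lambda>i j. \<Sum>k\<le>degree p. coeff p k * mat_pow n A k i j)"

definition vecmatT :: "nat \<Rightarrow> (nat \<Rightarrow> 'a::comm_ring_1) \<Rightarrow> (nat \<Rightarrow> nat \<Rightarrow> 'a) \<Rightarrow> nat \<Rightarrow> 'a" where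
  "vecmatT n v A = (\<lambda>j. if j < n then \<Sum>l<n. v l * A j l else 0)"

definition poly_endo :: "'a::field poly \<Rightarrow> ((nat \<Rightarrow> 'a) \<Rightarrow> (nat \<Rightarrow> 'a)) \<Rightarrow> (nat \<Rightarrow> 'a) \<Rightarrow> nat \<Rightarrow> 'a" where
  "poly_endo q u v = (\<Sum>k\<le>degree q. sc (coeff q k) ((u ^^ k) v))"

definition cyclic_endo :: "(nat \<Rightarrow> 'a::field) set \<Rightarrow> ((nat \<Rightarrow> 'a) \<Rightarrow> (nat \<Rightarrow> 'a)) \<Rightarrow> bool" where
  "cyclic_endo V u \<longleftrightarrow> module.subspace sc V \<and> u ` V \<subseteq> V \<and>
     (\<exists>v\<in>V. let d = vector_space.dim sc V in
        inj_on (\<lambda>j. (u ^^ j) v) {..<d}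
        \<and> \<not> module.dependent sc ((\<lambda>j. (u ^^ j) v) ` {..<d})
        \<and> module.span sc ((\<lambda>j. (u ^^ j) v) ` {..<d}) = V)"

definition is_min_poly :: "(nat \<Rightarrow> 'a::field) set \<Rightarrow> ((nat \<Rightarrow> 'a) \<Rightarrow> (nat \<Rightarrow> 'a)) \<Rightarrow> 'a poly \<Rightarrow> bool" where
  "is_min_poly V u \<Theta> \<longleftrightarrow> lead_coeff \<Theta> = 1 \<and> (\<forall>v\<in>V. poly_endo \<Theta> u v = 0) \<and>
     (\<forall>q. (\<forall>v\<in>V. poly_endo q u v = 0) \<longrightarrow> \<Theta> dvd q)"

text \<open>The Theta-polynomial code of length deg Theta with generator g: coefficient vectors of the
  reduced representatives of elements of the ideal (g) of L[x]/(Theta).\<close>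
definition poly_code :: "'l::field poly \<Rightarrow> 'l poly \<Rightarrow> (nat \<Rightarrow> 'l) set" where
  "poly_code \<Theta> g = {(\<lambda>j. coeff ((g * Q) mod \<Theta>) j) | Q. True}"

definition compositions :: "nat set \<Rightarrow> (nat \<Rightarrow> nat) \<Rightarrow> nat \<Rightarrow> (nat \<Rightarrow> nat) set" where
  "compositions \<Lambda> kk r = {rr. (\<forall>i. i \<notin> \<Lambda> \<longrightarrow> rr i = 0) \<and> (\<forall>i\<in>\<Lambda>. rr i \<le> kk i)
                                \<and> (\<Sum>i\<in>\<Lambda>. rr i) = r}"

end

theory Submission
  imports Defs
begin

definition sms :: "'b::ab_group_add set \<Rightarrow> 'b set \<Rightarrow> 'b set" where
  "sms X Y = {x + y | x y. x \<in> X \<and> y \<in> Y}"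

definition fdm :: "('a::field \<Rightarrow> 'b::ab_group_add \<Rightarrow> 'b) \<Rightarrow> 'b set \<Rightarrow> bool" where
  "fdm s S \<longleftrightarrow> (\<exists>W. finite W \<and> S \<subseteq> module.span s W)"

definition lin_on :: "('a::field \<Rightarrow> 'b::ab_group_add \<Rightarrow> 'b) \<Rightarrow> 'b set \<Rightarrow> ('b \<Rightarrow> 'b) \<Rightarrow> bool" where
  "lin_on s S f \<longleftrightarrow> (\<forall>x\<in>S. \<forall>y\<in>S. f (x + y) = f x + f y) \<and> (\<forall>c. \<forall>x\<in>S. f (s c x) = s c (f x))"

definition proj :: "'b::ab_group_add set \<Rightarrow> 'b set \<Rightarrow> 'b \<Rightarrow> 'b" where
  "proj X Y v = (THE y. y \<in> Y \<and> v - y \<in> X)"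

context vector_space
begin

lemma fdm_subset: "fdm scale T \<Longrightarrow> S \<subseteq> T \<Longrightarrow> fdm scale S"
  unfolding fdm_def by blast

lemma fdm_span: "fdm scale S \<Longrightarrow> fdm scale (span S)"
  unfolding fdm_def by (metis span_minimal subspace_span)

lemma fdm_finite: "finite W \<Longrightarrow> fdm scale W"
  unfolding fdm_def using span_superset by blast

lemma fdm_basis:
  assumes "fdm scale S"
  obtains B where "B \<subseteq> S" "independent B" "S \<subseteq> span B" "finite B" "card B = dim S"
proof -
  obtain B where B: "B \<subseteq> S" "independent B" "S \<subseteq> span B" "card B = dim S"
    by (rule basis_exists)
  from assms obtain W where W: "finite W" "S \<subseteq> span W" by (auto simp: fdm_def)
  have "finite B" using independent_span_bound[OF W(1) B(2)] B(1) W(2) by auto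
  with B that show ?thesis by blast
qed

lemma dim_mono_fd:
  assumes "fdm scale T" "S \<subseteq> T"
  shows "dim S \<le> dim T"
proof -
  obtain B where B: "B \<subseteq> S" "independent B" "S \<subseteq> span B" "card B = dim S"
    by (rule basis_exists)
  obtain B' where B': "B \<subseteq> B'" "B' \<subseteq> T" "independent B'" "T \<subseteq> span B'"
    using maximal_independent_subset_extend[of B T, OF _ B(2)] B(1) assms(2) by blast
  from assms obtain W where W: "finite W" "T \<subseteq> span W" by (auto simp: fdm_def)
  have "finite B'" using independent_span_bound[OF W(1) B'(3)] B'(2) W(2) by auto
  then have "card B \<le> card B'" using B'(1) card_mono by blast
  moreover have "card B' = dim T" using basis_card_eq_dim B' by auto
  ultimately show ?thesis using B by simp
qed

lemma fdm_sms: "fdm scale S \<Longrightarrow> fdm scale T \<Longrightarrow> fdm scale (sms S T)"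
proof -
  assume "fdm scale S" "fdm scale T"
  then obtain W1 W2 where "finite W1" "S \<subseteq> span W1" "finite W2" "T \<subseteq> span W2"
    by (auto simp: fdm_def)
  then have "sms S T \<subseteq> span (W1 \<union> W2)"
    unfolding sms_def span_Un by blast
  then show ?thesis unfolding fdm_def using \<open>finite W1\<close> \<open>finite W2\<close> by blast
qed

lemma subspace_sms: "subspace S \<Longrightarrow> subspace T \<Longrightarrow> subspace (sms S T)"
  unfolding sms_def by (rule subspace_sums)

lemma dim_sms_le:
  assumes "fdm scale S" "fdm scale T"
  shows "dim (sms S T) \<le> dim S + dim T"
proof -
  obtain B1 where B1: "B1 \<subseteq> S" "independent B1" "S \<subseteq> span B1" "finite B1" "card B1 = dim S"
    using fdm_basis[OF assms(1)] by blast
  obtain B2 where B2: "B2 \<subseteq> T" "independent B2" "T \<subseteq> span B2" "finite B2" "card B2 = dim T"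
    using fdm_basis[OF assms(2)] by blast
  have "sms S T \<subseteq> span (B1 \<union> B2)"
    using B1(3) B2(3) unfolding sms_def span_Un by blast
  then have "dim (sms S T) \<le> card (B1 \<union> B2)" using dim_le_card B1(4) B2(4) by blast
  also have "\<dots> \<le> card B1 + card B2" by (rule card_Un_le)
  finally show ?thesis using B1 B2 by simp
qed

lemma subspace_dim_zero:
  assumes "subspace S" "dim S = 0" "fdm scale S"
  shows "S = {0}"
proof -
  obtain B where B: "B \<subseteq> S" "independent B" "S \<subseteq> span B" "finite B" "card B = dim S"
    using fdm_basis[OF assms(3)] by blast
  then have "B = {}" using assms by simp
  then show ?thesis using B(3) assms(1) subspace_0 by auto
qed

lemma exists_subspace_dim:
  assumes "subspace S" "fdm scale S" "r \<le> dim S"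
  shows "\<exists>D. subspace D \<and> D \<subseteq> S \<and> dim D = r"
proof -
  obtain B where B: "B \<subseteq> S" "independent B" "S \<subseteq> span B" "finite B" "card B = dim S"
    using fdm_basis[OF assms(2)] by blast
  obtain B' where B': "B' \<subseteq> B" "card B' = r"
    using obtain_subset_with_card_n[of r B] assms(3) B(5) by metis
  have "independent B'" using B(2) B'(1) independent_mono by blast
  then have "dim (span B') = r" using dim_span_eq_card_independent B'(2) by simp
  moreover have "span B' \<subseteq> S" using B'(1) B(1) assms(1) span_minimal by blast
  ultimately show ?thesis by blast
qed


lemma lin_on_zero: "subspace S \<Longrightarrow> lin_on scale S f \<Longrightarrow> f 0 = 0"
  unfolding lin_on_def by (metis scale_zero_left subspace_0)

lemma lin_on_sum:
  assumes "subspace S" "lin_on scale S f" "finite I" "\<forall>i\<in>I. v i \<in> S"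
  shows "f (\<Sum>i\<in>I. v i) = (\<Sum>i\<in>I. f (v i))"
  using assms(3,4)
proof (induction I rule: finite_induct)
  case empty then show ?case using lin_on_zero[OF assms(1,2)] by simp
next
  case (insert x F)
  have "sum v F \<in> S" using insert(4) by (intro subspace_sum[OF assms(1)]) auto
  then show ?case using insert assms(2) unfolding lin_on_def by simp
qed

lemma lin_on_image_subspace:
  assumes "subspace S" "lin_on scale S f"
  shows "subspace (f ` S)"
  unfolding subspace_def
proof (intro conjI ballI allI)
  show "0 \<in> f ` S" using lin_on_zero[OF assms] subspace_0[OF assms(1)] by force
  fix x y assume "x \<in> f ` S" "y \<in> f ` S"
  then obtain x' y' where "x' \<in> S" "y' \<in> S" "x = f x'" "y = f y'" by blast
  then have "x + y = f (x' + y')" "x' + y' \<in> S" using assms subspace_add unfolding lin_on_def by auto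
  then show "x + y \<in> f ` S" by blast
next
  fix c x assume "x \<in> f ` S"
  then obtain x' where "x' \<in> S" "x = f x'" by blast
  then have "c *s x = f (c *s x')" "c *s x' \<in> S" using assms subspace_scale unfolding lin_on_def by auto
  then show "c *s x \<in> f ` S" by blast
qed

lemma rank_nullity:
  assumes S: "subspace S" and fd: "fdm scale S" and f: "lin_on scale S f"
  shows "dim S = dim {x\<in>S. f x = 0} + dim (f ` S)"
proof -
  let ?K = "{x\<in>S. f x = 0}"
  obtain B0 where B0: "B0 \<subseteq> ?K" "independent B0" "?K \<subseteq> span B0" "card B0 = dim ?K"
    by (rule basis_exists)
  obtain B where B: "B0 \<subseteq> B" "B \<subseteq> S" "independent B" "S \<subseteq> span B"
    using maximal_independent_subset_extend[of B0 S] B0 by auto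
  from fd obtain W where W: "finite W" "S \<subseteq> span W" by (auto simp: fdm_def)
  have finB: "finite B" using independent_span_bound[OF W(1) B(3)] B(2) W(2) by auto
  have finB0: "finite B0" using finB B(1) finite_subset by blast
  have cardB: "card B = dim S" using basis_card_eq_dim B by auto
  define B1 where "B1 = B - B0"
  have finB1: "finite B1" using finB B1_def by simp
  have B1S: "B1 \<subseteq> S" using B B1_def by auto
  have key: "\<forall>b\<in>B1. g b = 0" if g0: "(\<Sum>b\<in>B1. g b *s f b) = 0" for g
  proof -
    let ?v = "\<Sum>b\<in>B1. g b *s b"
    have vS: "?v \<in> S" using B1S S by (auto intro!: subspace_sum subspace_scale)
    have "f ?v = (\<Sum>b\<in>B1. f (g b *s b))"
      using lin_on_sum[OF S f finB1, of "\<lambda>b. g b *s b"] B1S S by (auto intro: subspace_scale)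
    also have "\<dots> = (\<Sum>b\<in>B1. g b *s f b)"
      using f B1S unfolding lin_on_def by (auto intro!: sum.cong)
    finally have "?v \<in> ?K" using vS g0 by simp
    then have "?v \<in> span B0" using B0 by auto
    then obtain h where h: "?v = (\<Sum>b\<in>B0. h b *s b)"
      using span_finite[OF finB0] by auto
    define c where "c b = (if b \<in> B1 then g b else - h b)" for b
    have BU: "B = B1 \<union> B0" "B1 \<inter> B0 = {}" using B(1) B1_def by auto
    have "(\<Sum>b\<in>B. c b *s b) = (\<Sum>b\<in>B1. c b *s b) + (\<Sum>b\<in>B0. c b *s b)"
      using BU finB1 finB0 by (simp add: sum.union_disjoint)
    also have "(\<Sum>b\<in>B1. c b *s b) = ?v" by (auto simp: c_def intro!: sum.cong)
    also have "(\<Sum>b\<in>B0. c b *s b) = (\<Sum>b\<in>B0. - (h b *s b))"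
      using BU by (intro sum.cong) (auto simp: c_def)
    also have "\<dots> = - (\<Sum>b\<in>B0. h b *s b)" by (rule sum_negf)
    finally have "(\<Sum>b\<in>B. c b *s b) = 0" using h by simp
    then have "\<forall>b\<in>B. c b = 0" using independentD[OF B(3) finB order_refl] by blast
    then show ?thesis using B1_def c_def by auto
  qed
  have injB1: "inj_on f B1"
  proof (rule inj_onI, rule ccontr)
    fix x y assume xy: "x \<in> B1" "y \<in> B1" "f x = f y" "x \<noteq> y"
    define g where "g b = (if b = x then (1::'a) else 0) - (if b = y then 1 else 0)" for b
    have "(\<Sum>b\<in>B1. g b *s f b) = (\<Sum>b\<in>B1. (if b = x then f b else 0) - (if b = y then f b else 0))"
      by (intro sum.cong) (auto simp: g_def scale_left_diff_distrib)
    also have "\<dots> = (\<Sum>b\<in>B1. (if b = x then f b else 0)) - (\<Sum>b\<in>B1. (if b = y then f b else 0))"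
      by (rule sum_subtractf)
    also have "\<dots> = 0" using xy finB1 by (simp add: sum.delta)
    finally have "g x = 0" using key xy by blast
    then show False using xy by (simp add: g_def)
  qed
  have indep: "independent (f ` B1)"
  proof (rule independent_if_scalars_zero)
    show "finite (f ` B1)" using finB1 by simp
    fix c y assume s: "(\<Sum>x\<in>f ` B1. c x *s x) = 0" and y: "y \<in> f ` B1"
    have "(\<Sum>b\<in>B1. c (f b) *s f b) = 0" using s sum.reindex[OF injB1, of "\<lambda>x. c x *s x"] by simp
    then show "c y = 0" using key[of "\<lambda>b. c (f b)"] y by auto
  qed
  have spn: "f ` S \<subseteq> span (f ` B1)"
  proof
    fix z assume "z \<in> f ` S"
    then obtain x where x: "x \<in> S" "z = f x" by auto
    then obtain u where u: "x = (\<Sum>b\<in>B. u b *s b)" using B(4) span_finite[OF finB] by auto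
    have "f x = (\<Sum>b\<in>B. f (u b *s b))"
      using u lin_on_sum[OF S f finB, of "\<lambda>b. u b *s b"] B(2) S by (auto intro: subspace_scale)
    also have "\<dots> = (\<Sum>b\<in>B. u b *s f b)"
      using f B(2) unfolding lin_on_def by (auto intro!: sum.cong)
    also have "\<dots> = (\<Sum>b\<in>B1. u b *s f b) + (\<Sum>b\<in>B0. u b *s f b)"
      using B(1) finB1 finB0 B1_def by (subst sum.union_disjoint[symmetric]) (auto intro!: sum.cong)
    also have "(\<Sum>b\<in>B0. u b *s f b) = 0" using B0(1) by (auto intro!: sum.neutral)
    finally have "f x = (\<Sum>b\<in>B1. u b *s f b)" by simp
    moreover have "(\<Sum>b\<in>B1. u b *s f b) \<in> span (f ` B1)"
      by (intro span_sum span_scale span_base) auto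
    ultimately show "z \<in> span (f ` B1)" using x by simp
  qed
  have "f ` B1 \<subseteq> f ` S" using B1S by auto
  then have "dim (f ` S) = card (f ` B1)" using basis_card_eq_dim[of "f ` B1" "f ` S"] spn indep by simp
  also have "\<dots> = card B1" using card_image[OF injB1] .
  also have "\<dots> = card B - card B0" using B1_def B(1) finB0 by (simp add: card_Diff_subset)
  finally show ?thesis using cardB B0(4) card_mono[OF finB B(1)] by simp
qed

lemma dim_zero_space[simp]: "dim {0} = 0"
  by (metis dim_span span_empty dim_eq_card_independent independent_empty card.empty)

lemma dim_inj_image:
  assumes "subspace S" "fdm scale S" "lin_on scale S f" "inj_on f S"
  shows "dim (f ` S) = dim S"
proof -
  have "{x\<in>S. f x = 0} = {0}"
    using inj_onD[OF assms(4)] lin_on_zero[OF assms(1,3)] subspace_0[OF assms(1)] by auto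
  then show ?thesis using rank_nullity[OF assms(1-3)] by simp
qed


lemma proj_sum:
  assumes "subspace X" "subspace Y" "X \<inter> Y = {0}" "x \<in> X" "y \<in> Y"
  shows "proj X Y (x + y) = y"
  unfolding proj_def
proof (rule the_equality)
  show "y \<in> Y \<and> x + y - y \<in> X" using assms by simp
  fix y' assume y': "y' \<in> Y \<and> x + y - y' \<in> X"
  then have "y - y' \<in> Y" using assms subspace_diff by blast
  moreover have "y - y' = (x + y - y') - x" by (simp add: algebra_simps)
  then have "y - y' \<in> X" using y' assms subspace_diff by metis
  ultimately have "y - y' = 0" using assms(3) by blast
  then show "y' = y" by simp
qed

lemma lin_on_proj:
  assumes "subspace X" "subspace Y" "X \<inter> Y = {0}"
  shows "lin_on scale (sms X Y) (proj X Y)"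
  unfolding lin_on_def sms_def
proof (intro conjI ballI allI)
  fix u v assume "u \<in> {x + y |x y. x \<in> X \<and> y \<in> Y}" "v \<in> {x + y |x y. x \<in> X \<and> y \<in> Y}"
  then obtain x1 y1 x2 y2 where "u = x1 + y1" "v = x2 + y2" "x1 \<in> X" "y1 \<in> Y" "x2 \<in> X" "y2 \<in> Y" by auto
  moreover have "u + v = (x1 + x2) + (y1 + y2)" using calculation by (simp add: algebra_simps)
  ultimately show "proj X Y (u + v) = proj X Y u + proj X Y v"
    using assms proj_sum subspace_add by metis
next
  fix c u assume "u \<in> {x + y |x y. x \<in> X \<and> y \<in> Y}"
  then obtain x1 y1 where "u = x1 + y1" "x1 \<in> X" "y1 \<in> Y" by auto
  moreover have "c *s u = c *s x1 + c *s y1" using calculation by (simp add: algebra_simps)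
  ultimately show "proj X Y (c *s u) = c *s proj X Y u"
    using assms proj_sum subspace_scale by metis
qed

lemma proj_kernel:
  assumes "subspace X" "subspace Y" "X \<inter> Y = {0}"
  shows "{v \<in> sms X Y. proj X Y v = 0} = X"
proof safe
  fix v assume "v \<in> sms X Y" "proj X Y v = 0"
  then obtain x y where "v = x + y" "x \<in> X" "y \<in> Y" by (auto simp: sms_def)
  then show "v \<in> X" using proj_sum[OF assms] \<open>proj X Y v = 0\<close> by auto
next
  fix x assume x: "x \<in> X"
  have y0: "0 \<in> Y" using assms subspace_0 by auto
  have "x + 0 \<in> sms X Y" unfolding sms_def using x y0 by blast
  then show "x \<in> sms X Y" by simp
  have "proj X Y (x + 0) = 0" using proj_sum[OF assms x y0] .
  then show "proj X Y x = 0" by simp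
qed

lemma proj_image:
  assumes "subspace X" "subspace Y" "X \<inter> Y = {0}"
  shows "proj X Y ` sms X Y = Y"
proof safe
  fix v assume "v \<in> sms X Y"
  then obtain x y where "v = x + y" "x \<in> X" "y \<in> Y" by (auto simp: sms_def)
  then show "proj X Y v \<in> Y" using proj_sum[OF assms] by auto
next
  fix y assume y: "y \<in> Y"
  have x0: "0 \<in> X" using assms subspace_0 by auto
  have "0 + y \<in> sms X Y" unfolding sms_def using x0 y by blast
  moreover have "proj X Y (0 + y) = y" using proj_sum[OF assms x0 y] .
  ultimately show "y \<in> proj X Y ` sms X Y" by (metis image_eqI)
qed

lemma dim_direct_sum:
  assumes "subspace X" "subspace Y" "X \<inter> Y = {0}" "fdm scale X" "fdm scale Y"
  shows "dim (sms X Y) = dim X + dim Y"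
  using rank_nullity[OF subspace_sms[OF assms(1,2)] fdm_sms[OF assms(4,5)] lin_on_proj[OF assms(1-3)]]
    proj_kernel[OF assms(1-3)] proj_image[OF assms(1-3)] by simp

end

lemma vs_sc: "vector_space (sc :: 'a::field \<Rightarrow> (nat \<Rightarrow> 'a) \<Rightarrow> (nat \<Rightarrow> 'a))"
  by unfold_locales (auto simp: sc_def fun_eq_iff algebra_simps)

interpretation vs: vector_space "sc :: 'a::field \<Rightarrow> (nat \<Rightarrow> 'a) \<Rightarrow> (nat \<Rightarrow> 'a)"
  by (rule vs_sc)

lemma sc_apply: "sc a v j = a * v j"
  by (simp add: sc_def)

definition unitv :: "nat \<Rightarrow> nat \<Rightarrow> 'a::field" where
  "unitv j = (\<lambda>i. if i = j then 1 else 0)"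

lemma sum_apply_fun: "(\<Sum>i\<in>I. f i) j = (\<Sum>i\<in>I. f i j)"
  by (induction I rule: infinite_finite_induct) auto

lemma vecs_subspace: "vs.subspace (vecs n)"
  unfolding vs.subspace_def vecs_def by (auto simp: sc_apply)

lemma vecs_expand: "v \<in> vecs n \<Longrightarrow> v = (\<Sum>j<n. sc (v j) (unitv j))"
proof (rule ext)
  fix x assume v: "v \<in> vecs n"
  have "(\<Sum>j<n. sc (v j) (unitv j)) x = (\<Sum>j<n. if x = j then v j else 0)"
    unfolding sum_apply_fun by (intro sum.cong) (auto simp: unitv_def sc_apply)
  also have "\<dots> = v x" using v by (auto simp: vecs_def)
  finally show "v x = (\<Sum>j<n. sc (v j) (unitv j)) x" by simp
qed

lemma vecs_span_units: "vecs n \<subseteq> vs.span (unitv ` {..<n})"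
proof
  fix v :: "nat \<Rightarrow> 'a" assume "v \<in> vecs n"
  then have "v = (\<Sum>j<n. sc (v j) (unitv j))" by (rule vecs_expand)
  also have "\<dots> \<in> vs.span (unitv ` {..<n})"
    by (intro vs.span_sum vs.span_scale vs.span_base) auto
  finally show "v \<in> vs.span (unitv ` {..<n})" .
qed

lemma fdm_vecs: "fdm sc (vecs n)"
  unfolding fdm_def using vecs_span_units by blast

lemma unitv_vecs: "j < n \<Longrightarrow> unitv j \<in> vecs n"
  by (auto simp: unitv_def vecs_def)

lemma inj_unitv: "inj (unitv :: nat \<Rightarrow> nat \<Rightarrow> 'a::field)"
  by (rule injI) (metis unitv_def zero_neq_one)

lemma dim_vecs: "vs.dim (vecs n :: (nat \<Rightarrow> 'a::field) set) = n"
proof -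
  have ind: "vs.independent (unitv ` {..<n} :: (nat \<Rightarrow> 'a) set)"
  proof (rule vs.independent_if_scalars_zero)
    show "finite (unitv ` {..<n} :: (nat \<Rightarrow> 'a) set)" by simp
    fix f :: "(nat \<Rightarrow> 'a) \<Rightarrow> 'a" and x :: "nat \<Rightarrow> 'a"
    assume s: "(\<Sum>x\<in>unitv ` {..<n}. sc (f x) x) = 0" and x: "x \<in> unitv ` {..<n}"
    then obtain j where j: "j < n" "x = unitv j" by auto
    have "(\<Sum>i<n. sc (f (unitv i)) (unitv i)) = 0"
      using s by (subst (asm) sum.reindex) (auto intro: inj_on_subset[OF inj_unitv])
    then have "(\<Sum>i<n. sc (f (unitv i)) (unitv i)) j = 0" by simp
    then have "(\<Sum>i<n. f (unitv i) * unitv i j) = 0" by (simp add: sum_apply_fun sc_apply)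
    moreover have "(\<Sum>i<n. f (unitv i) * unitv i j) = (\<Sum>i<n. if i = j then f (unitv i) else 0)"
      by (intro sum.cong) (auto simp: unitv_def)
    moreover have "\<dots> = f (unitv j)" using j by simp
    ultimately show "f x = 0" using j by simp
  qed
  have "vs.dim (vecs n :: (nat \<Rightarrow> 'a) set) = card (unitv ` {..<n} :: (nat \<Rightarrow> 'a) set)"
  proof -
    have "unitv ` {..<n} \<subseteq> (vecs n :: (nat \<Rightarrow> 'a) set)" using unitv_vecs by auto
    from vs.basis_card_eq_dim[OF this vecs_span_units ind] show ?thesis by simp
  qed
  also have "\<dots> = n" by (subst card_image) (auto intro: inj_on_subset[OF inj_unitv])
  finally show ?thesis .
qed

lemma dim_le_vecs: "S \<subseteq> vecs n \<Longrightarrow> vs.dim S \<le> n"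
  using vs.dim_mono_fd[OF fdm_vecs] dim_vecs by metis

lemma fdm_sub_vecs: "S \<subseteq> vecs n \<Longrightarrow> fdm sc S"
  using vs.fdm_subset[OF fdm_vecs] by blast


lemma dim_le_zero_space: "S \<subseteq> {0} \<Longrightarrow> vs.dim (S :: (nat \<Rightarrow> 'a::field) set) = 0"
  using vs.dim_le_card[of S "{}"] by simp

locale kb =
  fixes emb :: "'k::field \<Rightarrow> 'l::field" and b :: "nat \<Rightarrow> 'l" and m :: nat
  assumes emb: "field_emb emb" and basis: "is_K_basis emb b m"
begin

lemma emb_add: "emb (x + y) = emb x + emb y" using emb by (simp add: field_emb_def)
lemma emb_mult: "emb (x * y) = emb x * emb y" using emb by (simp add: field_emb_def)
lemma emb_one[simp]: "emb 1 = 1" using emb by (simp add: field_emb_def)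
lemma emb_zero[simp]: "emb 0 = 0"
proof -
  have "emb 0 = emb 0 + emb 0" using emb_add[of 0 0] by simp
  then show ?thesis by (metis add_left_cancel add.right_neutral)
qed
lemma emb_minus: "emb (- x) = - emb x"
  using emb_add[of x "-x"] by (simp add: eq_neg_iff_add_eq_0 add.commute)
lemma emb_diff: "emb (x - y) = emb x - emb y"
  using emb_add[of x "-y"] emb_minus by simp
lemma emb_sum: "emb (\<Sum>i\<in>I. f i) = (\<Sum>i\<in>I. emb (f i))"
  by (induction I rule: infinite_finite_induct) (auto simp: emb_add)
lemma emb_inj: "emb x = emb y \<Longrightarrow> x = y"
proof (rule ccontr)
  assume xy: "emb x = emb y" "x \<noteq> y"
  have "(x - y) * inverse (x - y) = 1" using xy(2) by simp
  moreover have "emb ((x - y) * inverse (x - y)) = (emb x - emb y) * emb (inverse (x - y))"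
    by (simp add: emb_mult emb_diff)
  ultimately have "(1::'l) = 0" using xy(1) by simp
  then show False by simp
qed
lemma emb_eq_0_iff[simp]: "emb x = 0 \<longleftrightarrow> x = 0"
  using emb_inj[of x 0] by auto

definition crd :: "'l \<Rightarrow> nat \<Rightarrow> 'k" where "crd x = coord emb b m x"

lemma crd_spec: "(\<forall>j\<ge>m. crd x j = 0) \<and> x = (\<Sum>j<m. emb (crd x j) * b j)"
proof -
  have "\<exists>!a. (\<forall>j\<ge>m. a j = 0) \<and> x = (\<Sum>j<m. emb (a j) * b j)" using basis by (simp add: is_K_basis_def)
  from theI'[OF this] show ?thesis by (simp add: crd_def coord_def)
qed

lemma crd_unique:
  assumes "\<forall>j\<ge>m. a j = 0" "x = (\<Sum>j<m. emb (a j) * b j)"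
  shows "crd x = a"
proof -
  have u: "\<exists>!a. (\<forall>j\<ge>m. a j = 0) \<and> x = (\<Sum>j<m. emb (a j) * b j)" using basis by (simp add: is_K_basis_def)
  show ?thesis using crd_spec[of x] assms u by blast
qed

lemma crd_add: "crd (x + y) = (\<lambda>j. crd x j + crd y j)"
proof (rule crd_unique)
  show "\<forall>j\<ge>m. crd x j + crd y j = 0" using crd_spec by simp
  have "x + y = (\<Sum>j<m. emb (crd x j) * b j) + (\<Sum>j<m. emb (crd y j) * b j)" using crd_spec by metis
  also have "\<dots> = (\<Sum>j<m. emb (crd x j + crd y j) * b j)"
    by (simp add: emb_add distrib_right sum.distrib)
  finally show "x + y = (\<Sum>j<m. emb (crd x j + crd y j) * b j)" .
qed

lemma crd_scale: "crd (emb c * x) = (\<lambda>j. c * crd x j)"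
proof (rule crd_unique)
  show "\<forall>j\<ge>m. c * crd x j = 0" using crd_spec by simp
  have "emb c * x = emb c * (\<Sum>j<m. emb (crd x j) * b j)" using crd_spec by metis
  also have "\<dots> = (\<Sum>j<m. emb (c * crd x j) * b j)"
    by (simp add: emb_mult sum_distrib_left mult.assoc)
  finally show "emb c * x = (\<Sum>j<m. emb (c * crd x j) * b j)" .
qed

lemma crd_zero[simp]: "crd 0 = (\<lambda>j. 0)"
  by (rule crd_unique) auto

lemma crd_sum: "crd (\<Sum>i\<in>I. f i) = (\<lambda>j. \<Sum>i\<in>I. crd (f i) j)"
  by (induction I rule: infinite_finite_induct) (auto simp: crd_add)

lemma crd_eq0: "(\<forall>j<m. crd x j = 0) \<Longrightarrow> x = 0"
  using crd_spec[of x] by simp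

definition rowv :: "nat \<Rightarrow> (nat \<Rightarrow> 'l) \<Rightarrow> nat \<Rightarrow> (nat \<Rightarrow> 'k)" where
  "rowv n c s = (\<lambda>l. if l < n then crd (c l) s else 0)"

definition RS :: "nat \<Rightarrow> (nat \<Rightarrow> 'l) set \<Rightarrow> (nat \<Rightarrow> 'k) set" where
  "RS n D = {rowv n d s | d s. d \<in> D \<and> s < m}"

lemma rowv_vecs: "rowv n c s \<in> vecs n"
  by (simp add: rowv_def vecs_def)

lemma RS_vecs: "RS n D \<subseteq> vecs n"
  using rowv_vecs by (auto simp: RS_def)

lemma rowv_add: "rowv n (c + c') s = rowv n c s + rowv n c' s"
  by (auto simp: rowv_def crd_add fun_eq_iff)

lemma rowv_zero[simp]: "rowv n 0 s = 0"
  by (auto simp: rowv_def fun_eq_iff)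

lemma rowv_sum: "rowv n (\<Sum>i\<in>I. f i) s = (\<Sum>i\<in>I. rowv n (f i) s)"
proof (induction I rule: infinite_finite_induct)
  case (insert x F)
  have "rowv n (\<Sum>i\<in>insert x F. f i) s = rowv n (f x + (\<Sum>i\<in>F. f i)) s"
    by (simp only: sum.insert[OF insert(1,2)])
  also have "\<dots> = rowv n (f x) s + rowv n (\<Sum>i\<in>F. f i) s" by (rule rowv_add)
  also have "\<dots> = rowv n (f x) s + (\<Sum>i\<in>F. rowv n (f i) s)" by (simp only: insert.IH)
  also have "\<dots> = (\<Sum>i\<in>insert x F. rowv n (f i) s)" by (simp only: sum.insert[OF insert(1,2)])
  finally show ?case .
next
  case (infinite A)
  show ?case by (simp only: sum.infinite[OF infinite] rowv_zero)
next
  case empty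
  show ?case by (simp only: sum.empty rowv_zero)
qed

lemma rowv_diff: "rowv n (c - c') s = rowv n c s - rowv n c' s"
  using rowv_add[of n "c - c'" c' s] by simp

lemma rowv_eq0: "c \<in> vecs n \<Longrightarrow> (\<forall>s<m. rowv n c s = 0) \<Longrightarrow> c = 0"
proof (rule ext)
  fix l assume c: "c \<in> vecs n" and r: "\<forall>s<m. rowv n c s = 0"
  show "c l = 0 l"
  proof (cases "l < n")
    case True
    then have "\<forall>s<m. crd (c l) s = 0" using r by (auto simp: rowv_def fun_eq_iff) (metis True)
    then show ?thesis using crd_eq0 by simp
  next
    case False then show ?thesis using c by (simp add: vecs_def)
  qed
qed

lemma Rsupp_sp_eq: "Rsupp_sp emb b m n D = vs.span (RS n D)"
proof -
  have R: "Rsupp emb b m n d = vs.span {rowv n d s | s. s < m}" for d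
    unfolding Rsupp_def rowv_def crd_def by simp
  have "vs.span (\<Union>d\<in>D. Rsupp emb b m n d) = vs.span (RS n D)"
    unfolding vs.span_eq
  proof
    show "(\<Union>d\<in>D. Rsupp emb b m n d) \<subseteq> vs.span (RS n D)"
      unfolding R by (intro UN_least vs.span_mono) (auto simp: RS_def)
    show "RS n D \<subseteq> vs.span (\<Union>d\<in>D. Rsupp emb b m n d)"
      unfolding R RS_def by (auto intro!: vs.span_base vs.span_superset[THEN subsetD])
  qed
  then show ?thesis by (simp add: Rsupp_sp_def)
qed

lemma wt_eq: "wtR_sp emb b m n D = vs.dim (RS n D)"
  by (simp add: wtR_sp_def Rsupp_sp_eq)

lemma wt_le: "wtR_sp emb b m n D \<le> n"
  unfolding wt_eq using dim_le_vecs[OF RS_vecs] .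

lemma wt_zero: "wtR_sp emb b m n {0} = 0"
  unfolding wt_eq by (rule dim_le_zero_space) (auto simp: RS_def)

lemma Mr_le:
  assumes "vs.subspace D" "D \<subseteq> C" "vs.dim D = r"
  shows "Mr emb b m n C r \<le> wtR_sp emb b m n D"
proof (cases "r = 0")
  case True then show ?thesis by (simp add: Mr_def)
next
  case False
  let ?S = "{wtR_sp emb b m n D | D. vs.subspace D \<and> D \<subseteq> C \<and> vs.dim D = r}"
  have "?S \<subseteq> {..n}" using wt_le by auto
  then have "finite ?S" using finite_subset by blast
  moreover have "wtR_sp emb b m n D \<in> ?S" using assms by blast
  ultimately have "Min ?S \<le> wtR_sp emb b m n D" by (rule Min_le)
  then show ?thesis using False by (simp add: Mr_def)
qed

lemma Mr_attained:
  assumes "vs.subspace C" "C \<subseteq> vecs n" "r \<le> vs.dim C"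
  shows "\<exists>D. vs.subspace D \<and> D \<subseteq> C \<and> vs.dim D = r \<and> wtR_sp emb b m n D = Mr emb b m n C r"
proof (cases "r = 0")
  case True
  have "vs.subspace {0::nat \<Rightarrow> 'l}" by simp
  moreover have "{0} \<subseteq> C" using assms(1) vs.subspace_0 by auto
  ultimately show ?thesis using True wt_zero by (intro exI[of _ "{0}"]) (auto simp: Mr_def)
next
  case False
  let ?S = "{wtR_sp emb b m n D | D. vs.subspace D \<and> D \<subseteq> C \<and> vs.dim D = r}"
  have "?S \<subseteq> {..n}" using wt_le by auto
  then have "finite ?S" using finite_subset by blast
  moreover have "?S \<noteq> {}"
    using vs.exists_subspace_dim[OF assms(1) fdm_sub_vecs[OF assms(2)] assms(3)] by blast
  ultimately have "Min ?S \<in> ?S" by (rule Min_in)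
  then show ?thesis using False by (auto simp: Mr_def)
qed

end

lemma module_sc: "module (sc :: 'a::field \<Rightarrow> (nat \<Rightarrow> 'a) \<Rightarrow> _)"
  using vs_sc by (simp add: module_iff_vector_space)

lemma hom_sc_intro:
  assumes "\<And>x y. f (x + y) = f x + f y" "\<And>c x. f (sc c x) = sc c (f x)"
  shows "module_hom (sc :: 'a::field \<Rightarrow> (nat \<Rightarrow> 'a) \<Rightarrow> _) sc f"
  using assms module_sc by (simp add: module_hom_iff)

lemma hom_lin_on: "module_hom (sc :: 'a::field \<Rightarrow> (nat \<Rightarrow> 'a) \<Rightarrow> _) sc f \<Longrightarrow> lin_on sc S f"
  by (simp add: module_hom_iff lin_on_def)

lemma lin_on_subset: "lin_on s S f \<Longrightarrow> T \<subseteq> S \<Longrightarrow> lin_on s T f"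
  unfolding lin_on_def by blast

lemma vecs_add: "(x :: nat \<Rightarrow> 'a::monoid_add) \<in> vecs n \<Longrightarrow> y \<in> vecs n \<Longrightarrow> x + y \<in> vecs n"
  by (auto simp: vecs_def)

lemma sms_vecs: "(X :: (nat \<Rightarrow> 'a::ab_group_add) set) \<subseteq> vecs n \<Longrightarrow> Y \<subseteq> vecs n \<Longrightarrow> sms X Y \<subseteq> vecs n"
  unfolding sms_def using vecs_add by blast

definition kmap :: "nat \<Rightarrow> nat \<Rightarrow> (nat \<Rightarrow> nat \<Rightarrow> 'a::field) \<Rightarrow> (nat \<Rightarrow> 'a) \<Rightarrow> (nat \<Rightarrow> 'a)" where
  "kmap n n' A x = (\<lambda>l. if l < n then \<Sum>j<n'. A l j * x j else 0)"

lemma kmap_hom: "module_hom sc sc (kmap n n' A)"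
  by (rule hom_sc_intro) (auto simp: kmap_def fun_eq_iff distrib_left sum.distrib sum_distrib_left mult.left_commute sc_apply)

lemma kmap_vecs: "kmap n n' A x \<in> vecs n"
  by (simp add: kmap_def vecs_def)

context kb
begin

definition lmap :: "nat \<Rightarrow> nat \<Rightarrow> (nat \<Rightarrow> nat \<Rightarrow> 'k) \<Rightarrow> (nat \<Rightarrow> 'l) \<Rightarrow> (nat \<Rightarrow> 'l)" where
  "lmap n n' A c = (\<lambda>l. if l < n then \<Sum>j<n'. emb (A l j) * c j else 0)"

lemma lmap_hom: "module_hom sc sc (lmap n n' A)"
  by (rule hom_sc_intro) (auto simp: lmap_def fun_eq_iff distrib_left sum.distrib sum_distrib_left mult.left_commute sc_apply)

lemma lmap_vecs: "lmap n n' A x \<in> vecs n"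
  by (simp add: lmap_def vecs_def)

lemma rowv_lmap: "rowv n (lmap n n' A c) s = kmap n n' A (rowv n' c s)"
proof (rule ext)
  fix l
  show "rowv n (lmap n n' A c) s l = kmap n n' A (rowv n' c s) l"
  proof (cases "l < n")
    case True
    have "rowv n (lmap n n' A c) s l = crd (\<Sum>j<n'. emb (A l j) * c j) s"
      using True by (simp add: rowv_def lmap_def)
    also have "\<dots> = (\<Sum>j<n'. A l j * crd (c j) s)"
      by (simp add: crd_sum crd_scale)
    also have "\<dots> = kmap n n' A (rowv n' c s) l"
      using True by (simp add: kmap_def rowv_def)
    finally show ?thesis .
  qed (simp add: rowv_def kmap_def)
qed

lemma RS_lmap: "RS n (lmap n n' A ` D) = kmap n n' A ` RS n' D"
proof
  show "RS n (lmap n n' A ` D) \<subseteq> kmap n n' A ` RS n' D"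
    unfolding RS_def by (auto simp: rowv_lmap intro!: imageI) blast
  show "kmap n n' A ` RS n' D \<subseteq> RS n (lmap n n' A ` D)"
  proof
    fix y assume "y \<in> kmap n n' A ` RS n' D"
    then obtain d s where "d \<in> D" "s < m" "y = kmap n n' A (rowv n' d s)" by (auto simp: RS_def)
    then have "y = rowv n (lmap n n' A d) s" "lmap n n' A d \<in> lmap n n' A ` D" by (auto simp: rowv_lmap)
    then show "y \<in> RS n (lmap n n' A ` D)" using \<open>s < m\<close> unfolding RS_def by blast
  qed
qed

lemma lmap_inj:
  assumes inj: "inj_on (kmap n n' A) (vecs n')"
  shows "inj_on (lmap n n' A) (vecs n')"
proof (rule inj_onI)
  fix c c' assume cc: "c \<in> vecs n'" "c' \<in> vecs n'" "lmap n n' A c = lmap n n' A c'"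
  interpret L: module_hom sc sc "lmap n n' A" by (rule lmap_hom)
  interpret K: module_hom sc sc "kmap n n' A" by (rule kmap_hom)
  have d: "c - c' \<in> vecs n'" using cc by (simp add: vecs_def)
  have "lmap n n' A (c - c') = 0" using cc L.diff by simp
  then have "\<forall>s<m. rowv n' (c - c') s = 0"
  proof (intro allI impI)
    fix s assume "lmap n n' A (c - c') = 0" "s < m"
    then have "kmap n n' A (rowv n' (c - c') s) = kmap n n' A 0"
      using rowv_lmap[of n n' A "c - c'" s] by simp
    from inj_onD[OF inj this rowv_vecs] show "rowv n' (c - c') s = 0"
      using vs.subspace_0[OF vecs_subspace] by blast
  qed
  then have "c - c' = 0" using rowv_eq0[OF d] by blast
  then show "c = c'" by simp
qed

lemma wt_lmap:
  assumes inj: "inj_on (kmap n n' A) (vecs n')"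
  shows "wtR_sp emb b m n (lmap n n' A ` D) = wtR_sp emb b m n' D"
proof -
  interpret K: module_hom sc sc "kmap n n' A" by (rule kmap_hom)
  have sub: "vs.span (RS n' D) \<subseteq> vecs n'"
    using RS_vecs vecs_subspace vs.span_minimal by blast
  have "wtR_sp emb b m n (lmap n n' A ` D) = vs.dim (vs.span (kmap n n' A ` RS n' D))"
    by (simp add: wt_eq RS_lmap)
  also have "\<dots> = vs.dim (kmap n n' A ` vs.span (RS n' D))"
    by (simp add: K.span_image)
  also have "\<dots> = vs.dim (vs.span (RS n' D))"
    by (rule vs.dim_inj_image) (use sub fdm_sub_vecs hom_lin_on[OF kmap_hom] inj_on_subset[OF inj sub] in auto)
  finally show ?thesis by (simp add: wt_eq)
qed

lemma Mr_lmap: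
  assumes inj: "inj_on (kmap n n' A) (vecs n')"
    and C: "vs.subspace C" "C \<subseteq> vecs n'"
  shows "Mr emb b m n (lmap n n' A ` C) r = Mr emb b m n' C r"
proof -
  interpret L: module_hom sc sc "lmap n n' A" by (rule lmap_hom)
  have linj: "inj_on (lmap n n' A) (vecs n')" by (rule lmap_inj[OF inj])
  have dimeq: "vs.dim (lmap n n' A ` D) = vs.dim D" if "vs.subspace D" "D \<subseteq> vecs n'" for D
    by (rule vs.dim_inj_image) (use that fdm_sub_vecs hom_lin_on[OF lmap_hom] inj_on_subset[OF linj] in auto)
  have "{wtR_sp emb b m n D' | D'. vs.subspace D' \<and> D' \<subseteq> lmap n n' A ` C \<and> vs.dim D' = r}
      = {wtR_sp emb b m n' D | D. vs.subspace D \<and> D \<subseteq> C \<and> vs.dim D = r}"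
  proof safe
    fix D' assume D': "vs.subspace D'" "D' \<subseteq> lmap n n' A ` C" "r = vs.dim D'"
    let ?D = "C \<inter> lmap n n' A -` D'"
    have img: "lmap n n' A ` ?D = D'" using D'(2) by blast
    have sub: "vs.subspace ?D" using C(1) L.subspace_vimage[OF D'(1)] by (rule vs.subspace_inter)
    have "?D \<subseteq> vecs n'" using C(2) by blast
    from dimeq[OF sub this] have "vs.dim ?D = vs.dim D'" unfolding img by simp
    moreover have "wtR_sp emb b m n D' = wtR_sp emb b m n' ?D" using wt_lmap[OF inj, of ?D] img by simp
    ultimately show "\<exists>D. wtR_sp emb b m n D' = wtR_sp emb b m n' D \<and> vs.subspace D \<and> D \<subseteq> C \<and> vs.dim D = vs.dim D'"
      using sub by blast
  next
    fix D assume D: "vs.subspace D" "D \<subseteq> C" "r = vs.dim D"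
    have "vs.subspace (lmap n n' A ` D)" using L.subspace_image[OF D(1)] .
    moreover have "vs.dim (lmap n n' A ` D) = vs.dim D" using dimeq D C by auto
    moreover have "lmap n n' A ` D \<subseteq> lmap n n' A ` C" using D by auto
    ultimately show "\<exists>D'. wtR_sp emb b m n' D = wtR_sp emb b m n D' \<and> vs.subspace D' \<and> D' \<subseteq> lmap n n' A ` C \<and> vs.dim D' = vs.dim D"
      using wt_lmap[OF inj, of D] by metis
  qed
  then show ?thesis by (simp add: Mr_def)
qed

end

context kb
begin

definition Ext :: "nat \<Rightarrow> (nat \<Rightarrow> 'k) set \<Rightarrow> (nat \<Rightarrow> 'l) set" where
  "Ext n X = {c \<in> vecs n. \<forall>s<m. rowv n c s \<in> X}"

lemma Ext_vecs: "Ext n X \<subseteq> vecs n"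
  by (auto simp: Ext_def)

lemma Ext_inter:
  assumes "X \<inter> Y = {0}" "A \<subseteq> Ext n X" "B \<subseteq> Ext n Y"
  shows "A \<inter> B \<subseteq> {0}"
proof
  fix c assume c: "c \<in> A \<inter> B"
  have "rowv n c s = 0" if s: "s < m" for s
  proof -
    have "rowv n c s \<in> X" using c assms(2) s by (auto simp: Ext_def)
    moreover have "rowv n c s \<in> Y" using c assms(3) s by (auto simp: Ext_def)
    ultimately have "rowv n c s \<in> X \<inter> Y" by blast
    then show ?thesis using assms(1) by simp
  qed
  then have "\<forall>s<m. rowv n c s = 0" by blast
  moreover have "c \<in> vecs n" using c assms by (auto simp: Ext_def)
  ultimately show "c \<in> {0}" using rowv_eq0 by blast
qed

lemma Ext_sms:
  assumes "A \<subseteq> Ext n X" "B \<subseteq> Ext n Y"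
  shows "sms A B \<subseteq> Ext n (sms X Y)"
proof
  fix c assume "c \<in> sms A B"
  then obtain a b' where ab: "c = a + b'" "a \<in> A" "b' \<in> B" by (auto simp: sms_def)
  then have "c \<in> vecs n" using assms vecs_add[of a n b'] by (auto simp: Ext_def)
  moreover have "rowv n c s \<in> sms X Y" if "s < m" for s
  proof -
    have "rowv n a s \<in> X" using ab assms(1) that by (auto simp: Ext_def)
    moreover have "rowv n b' s \<in> Y" using ab assms(2) that by (auto simp: Ext_def)
    ultimately show ?thesis unfolding ab(1) rowv_add sms_def by blast
  qed
  ultimately show "c \<in> Ext n (sms X Y)" by (auto simp: Ext_def)
qed

lemma fdm_RS: "fdm sc (vs.span (RS n D))"
  by (rule vs.fdm_span, rule fdm_sub_vecs, rule RS_vecs)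

lemma two_le:
  assumes X: "vs.subspace X" and Y: "vs.subspace Y" and XY: "X \<inter> Y = {0}"
    and A: "vs.subspace A" "A \<subseteq> Ext n X" and B: "vs.subspace B" "B \<subseteq> Ext n Y"
    and r1: "r1 \<le> vs.dim A" and r2: "r2 \<le> vs.dim B"
  shows "Mr emb b m n (sms A B) (r1 + r2) \<le> Mr emb b m n A r1 + Mr emb b m n B r2"
proof -
  have Av: "A \<subseteq> vecs n" and Bv: "B \<subseteq> vecs n" using A B Ext_vecs by blast+
  obtain DA where DA: "vs.subspace DA" "DA \<subseteq> A" "vs.dim DA = r1" "wtR_sp emb b m n DA = Mr emb b m n A r1"
    using Mr_attained[OF A(1) Av r1] by blast
  obtain DB where DB: "vs.subspace DB" "DB \<subseteq> B" "vs.dim DB = r2" "wtR_sp emb b m n DB = Mr emb b m n B r2"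
    using Mr_attained[OF B(1) Bv r2] by blast
  have int: "DA \<inter> DB = {0}"
    using Ext_inter[OF XY A(2) B(2)] DA(2) DB(2) vs.subspace_0[OF DA(1)] vs.subspace_0[OF DB(1)] by blast
  have dimD: "vs.dim (sms DA DB) = r1 + r2"
    using vs.dim_direct_sum[OF DA(1) DB(1) int] fdm_sub_vecs DA(2) DB(2) Av Bv DA(3) DB(3) by (metis order_trans)
  have subD: "vs.subspace (sms DA DB)" using vs.subspace_sms[OF DA(1) DB(1)] .
  have inD: "sms DA DB \<subseteq> sms A B" using DA(2) DB(2) by (auto simp: sms_def)
  have "Mr emb b m n (sms A B) (r1 + r2) \<le> wtR_sp emb b m n (sms DA DB)"
    by (rule Mr_le[OF subD inD dimD])
  also have "\<dots> \<le> wtR_sp emb b m n DA + wtR_sp emb b m n DB"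
  proof -
    have "RS n (sms DA DB) \<subseteq> sms (vs.span (RS n DA)) (vs.span (RS n DB))"
    proof
      fix y assume "y \<in> RS n (sms DA DB)"
      then obtain a b' s where "a \<in> DA" "b' \<in> DB" "s < m" "y = rowv n (a + b') s"
        by (auto simp: RS_def sms_def)
      then show "y \<in> sms (vs.span (RS n DA)) (vs.span (RS n DB))"
        unfolding sms_def rowv_add RS_def by (blast intro: vs.span_base)
    qed
    then have "vs.dim (RS n (sms DA DB)) \<le> vs.dim (sms (vs.span (RS n DA)) (vs.span (RS n DB)))"
      by (rule vs.dim_mono_fd[OF vs.fdm_sms[OF fdm_RS fdm_RS]])
    also have "\<dots> \<le> vs.dim (vs.span (RS n DA)) + vs.dim (vs.span (RS n DB))"
      by (rule vs.dim_sms_le[OF fdm_RS fdm_RS])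
    finally show ?thesis by (simp add: wt_eq)
  qed
  finally show ?thesis using DA(4) DB(4) by simp
qed

lemma two_ge:
  assumes X: "vs.subspace X" and Y: "vs.subspace Y" and XY: "X \<inter> Y = {0}"
    and A: "vs.subspace A" "A \<subseteq> Ext n X" and B: "vs.subspace B" "B \<subseteq> Ext n Y"
    and r: "r \<le> vs.dim (sms A B)" and Yv: "Y \<subseteq> vecs n"
  shows "\<exists>r1 r2. r1 \<le> vs.dim A \<and> r2 \<le> vs.dim B \<and> r1 + r2 = r \<and>
     Mr emb b m n A r1 + Mr emb b m n B r2 \<le> Mr emb b m n (sms A B) r"
proof -
  have Av: "A \<subseteq> vecs n" and Bv: "B \<subseteq> vecs n" using A B Ext_vecs by blast+
  have ABv: "sms A B \<subseteq> vecs n" using sms_vecs[OF Av Bv] .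
  have AB0: "A \<inter> B = {0}"
    using Ext_inter[OF XY A(2) B(2)] vs.subspace_0[OF A(1)] vs.subspace_0[OF B(1)] by blast
  obtain D where D: "vs.subspace D" "D \<subseteq> sms A B" "vs.dim D = r" "wtR_sp emb b m n D = Mr emb b m n (sms A B) r"
    using Mr_attained[OF vs.subspace_sms[OF A(1) B(1)] ABv r] by blast
  have Dv: "D \<subseteq> vecs n" using D(2) ABv by blast
  define D1 where "D1 = D \<inter> A"
  define D2 where "D2 = proj A B ` D"
  have linD: "lin_on sc D (proj A B)" using lin_on_subset[OF vs.lin_on_proj[OF A(1) B(1) AB0] D(2)] .
  have ker: "{x \<in> D. proj A B x = 0} = D1"
    using vs.proj_kernel[OF A(1) B(1) AB0] D(2) unfolding D1_def by blast
  have rn: "r = vs.dim D1 + vs.dim D2"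
    using vs.rank_nullity[OF D(1) fdm_sub_vecs[OF Dv] linD] ker D(3) unfolding D2_def by simp
  have D1s: "vs.subspace D1" "D1 \<subseteq> A" unfolding D1_def using vs.subspace_inter[OF D(1) A(1)] by auto
  have D2s: "vs.subspace D2" "D2 \<subseteq> B"
    unfolding D2_def using vs.lin_on_image_subspace[OF D(1) linD] vs.proj_image[OF A(1) B(1) AB0] D(2) by auto
  have r1: "vs.dim D1 \<le> vs.dim A" using vs.dim_mono_fd[OF fdm_sub_vecs[OF Av] D1s(2)] .
  have r2: "vs.dim D2 \<le> vs.dim B" using vs.dim_mono_fd[OF fdm_sub_vecs[OF Bv] D2s(2)] .
  have m1: "Mr emb b m n A (vs.dim D1) \<le> wtR_sp emb b m n D1" by (rule Mr_le[OF D1s(1,2) refl])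
  have m2: "Mr emb b m n B (vs.dim D2) \<le> wtR_sp emb b m n D2" by (rule Mr_le[OF D2s(1,2) refl])
  let ?R = "vs.span (RS n D)"
  have RXY: "?R \<subseteq> sms X Y"
  proof (rule vs.span_minimal[OF _ vs.subspace_sms[OF X Y]])
    show "RS n D \<subseteq> sms X Y"
      using D(2) Ext_sms[OF A(2) B(2)] by (auto simp: RS_def Ext_def)
  qed
  have linR: "lin_on sc ?R (proj X Y)" using lin_on_subset[OF vs.lin_on_proj[OF X Y XY] RXY] .
  have rnK: "vs.dim ?R = vs.dim {v \<in> ?R. proj X Y v = 0} + vs.dim (proj X Y ` ?R)"
    by (rule vs.rank_nullity[OF vs.subspace_span fdm_RS linR])
  have kerK: "{v \<in> ?R. proj X Y v = 0} = ?R \<inter> X"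
    using vs.proj_kernel[OF X Y XY] RXY by blast
  have w1: "wtR_sp emb b m n D1 \<le> vs.dim (?R \<inter> X)"
  proof -
    have "RS n D1 \<subseteq> ?R \<inter> X"
    proof
      fix y assume "y \<in> RS n D1"
      then obtain d s where "d \<in> D1" "s < m" "y = rowv n d s" by (auto simp: RS_def)
      then show "y \<in> ?R \<inter> X" using D1s(2) A(2) unfolding D1_def RS_def Ext_def
        by (blast intro: vs.span_base)
    qed
    then have "vs.span (RS n D1) \<subseteq> ?R \<inter> X"
      by (rule vs.span_minimal) (intro vs.subspace_inter vs.subspace_span X)
    then have "vs.dim (vs.span (RS n D1)) \<le> vs.dim (?R \<inter> X)"
      by (rule vs.dim_mono_fd[rotated]) (rule vs.fdm_subset[OF fdm_RS], blast)
    then show ?thesis by (simp add: wt_eq)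
  qed
  have w2: "wtR_sp emb b m n D2 \<le> vs.dim (proj X Y ` ?R)"
  proof -
    have "RS n D2 \<subseteq> proj X Y ` ?R"
    proof
      fix y assume "y \<in> RS n D2"
      then obtain d s where ds: "d \<in> D" "s < m" "y = rowv n (proj A B d) s" by (auto simp: RS_def D2_def)
      then obtain a b' where ab: "d = a + b'" "a \<in> A" "b' \<in> B" using D(2) by (auto simp: sms_def)
      have pd: "proj A B d = b'" using vs.proj_sum[OF A(1) B(1) AB0 ab(2,3)] ab(1) by simp
      have ra: "rowv n a s \<in> X" using ab(2) A(2) ds(2) by (auto simp: Ext_def)
      have rb: "rowv n b' s \<in> Y" using ab(3) B(2) ds(2) by (auto simp: Ext_def)
      have "proj X Y (rowv n d s) = rowv n b' s"
        using vs.proj_sum[OF X Y XY ra rb] ab(1) by (simp add: rowv_add)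
      moreover have "rowv n d s \<in> ?R" using ds by (auto simp: RS_def intro!: vs.span_base)
      ultimately show "y \<in> proj X Y ` ?R" using ds(3) pd by (metis image_eqI)
    qed
    then have "vs.span (RS n D2) \<subseteq> proj X Y ` ?R"
      by (rule vs.span_minimal) (rule vs.lin_on_image_subspace[OF vs.subspace_span linR])
    moreover have "fdm sc (proj X Y ` ?R)"
    proof -
      have "proj X Y ` ?R \<subseteq> Y" using vs.proj_image[OF X Y XY] RXY by blast
      then show ?thesis using fdm_sub_vecs Yv by blast
    qed
    ultimately have "vs.dim (vs.span (RS n D2)) \<le> vs.dim (proj X Y ` ?R)"
      using vs.dim_mono_fd by blast
    then show ?thesis by (simp add: wt_eq)
  qed
  have "Mr emb b m n A (vs.dim D1) + Mr emb b m n B (vs.dim D2) \<le> Mr emb b m n (sms A B) r"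
    using m1 m2 w1 w2 rnK kerK D(4) by (simp add: wt_eq)
  then show ?thesis using r1 r2 rn by (intro exI[of _ "vs.dim D1"] exI[of _ "vs.dim D2"]) auto
qed

end

primrec itsum :: "(nat \<Rightarrow> 'b::ab_group_add set) \<Rightarrow> nat \<Rightarrow> 'b set" where
  "itsum F 0 = {0}"
| "itsum F (Suc j) = sms (itsum F j) (F j)"

context kb
begin

lemma iter:
  assumes U: "\<forall>i<t. vs.subspace (U i) \<and> U i \<subseteq> vecs n"
    and A: "\<forall>i<t. vs.subspace (A i) \<and> A i \<subseteq> Ext n (U i)"
    and indep: "\<forall>i<t. itsum U i \<inter> U i = {0}"
  shows "j \<le> t \<Longrightarrow> vs.subspace (itsum U j) \<and> itsum U j \<subseteq> vecs n \<and> vs.subspace (itsum A j)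
     \<and> itsum A j \<subseteq> Ext n (itsum U j)
     \<and> vs.dim (itsum A j) = (\<Sum>i<j. vs.dim (A i))
     \<and> (\<forall>rr. (\<forall>i<j. rr i \<le> vs.dim (A i)) \<longrightarrow>
           Mr emb b m n (itsum A j) (\<Sum>i<j. rr i) \<le> (\<Sum>i<j. Mr emb b m n (A i) (rr i)))
     \<and> (\<forall>r \<le> vs.dim (itsum A j). \<exists>rr. (\<forall>i<j. rr i \<le> vs.dim (A i)) \<and> (\<Sum>i<j. rr i) = r
           \<and> (\<Sum>i<j. Mr emb b m n (A i) (rr i)) \<le> Mr emb b m n (itsum A j) r)"
proof (induction j)
  case 0
  have "{0::nat\<Rightarrow>'l} \<subseteq> Ext n {0}" by (auto simp: Ext_def vecs_def)
  moreover have "{0::nat\<Rightarrow>'k} \<subseteq> vecs n" by (auto simp: vecs_def)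
  moreover have "Mr emb b m n X 0 = 0" for X by (simp add: Mr_def)
  ultimately show ?case by auto
next
  case (Suc j)
  then have jt: "j < t" by simp
  note IH = Suc.IH[OF less_imp_le[OF jt]]
  let ?UA = "itsum U j" and ?AA = "itsum A j"
  have X: "vs.subspace ?UA" "?UA \<subseteq> vecs n" and AA: "vs.subspace ?AA" "?AA \<subseteq> Ext n ?UA"
    and dimAA: "vs.dim ?AA = (\<Sum>i<j. vs.dim (A i))" using IH by auto
  have Y: "vs.subspace (U j)" "U j \<subseteq> vecs n" using U jt by auto
  have Aj: "vs.subspace (A j)" "A j \<subseteq> Ext n (U j)" using A jt by auto
  have XY: "?UA \<inter> U j = {0}" using indep jt by auto
  have AAv: "?AA \<subseteq> vecs n" and Ajv: "A j \<subseteq> vecs n" using AA(2) Aj(2) Ext_vecs by blast+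
  have int: "?AA \<inter> A j = {0}"
    using Ext_inter[OF XY AA(2) Aj(2)] vs.subspace_0[OF AA(1)] vs.subspace_0[OF Aj(1)] by blast
  have p1: "vs.subspace (itsum U (Suc j))" using vs.subspace_sms[OF X(1) Y(1)] by simp
  have p2: "itsum U (Suc j) \<subseteq> vecs n" using sms_vecs[OF X(2) Y(2)] by simp
  have p3: "vs.subspace (itsum A (Suc j))" using vs.subspace_sms[OF AA(1) Aj(1)] by simp
  have p4: "itsum A (Suc j) \<subseteq> Ext n (itsum U (Suc j))" using Ext_sms[OF AA(2) Aj(2)] by simp
  have p5: "vs.dim (itsum A (Suc j)) = (\<Sum>i<Suc j. vs.dim (A i))"
    using vs.dim_direct_sum[OF AA(1) Aj(1) int fdm_sub_vecs[OF AAv] fdm_sub_vecs[OF Ajv]] dimAA by simp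
  have p6: "Mr emb b m n (itsum A (Suc j)) (\<Sum>i<Suc j. rr i) \<le> (\<Sum>i<Suc j. Mr emb b m n (A i) (rr i))"
    if rr: "\<forall>i<Suc j. rr i \<le> vs.dim (A i)" for rr
  proof -
    have r1: "(\<Sum>i<j. rr i) \<le> vs.dim ?AA" using rr dimAA by (auto intro!: sum_mono)
    have r2: "rr j \<le> vs.dim (A j)" using rr by auto
    have "Mr emb b m n (itsum A (Suc j)) (\<Sum>i<Suc j. rr i) = Mr emb b m n (sms ?AA (A j)) ((\<Sum>i<j. rr i) + rr j)"
      by simp
    also have "\<dots> \<le> Mr emb b m n ?AA (\<Sum>i<j. rr i) + Mr emb b m n (A j) (rr j)"
      by (rule two_le[OF X(1) Y(1) XY AA Aj r1 r2])
    also have "\<dots> \<le> (\<Sum>i<j. Mr emb b m n (A i) (rr i)) + Mr emb b m n (A j) (rr j)"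
      using IH rr by auto
    finally show ?thesis by simp
  qed
  have p7: "\<exists>rr. (\<forall>i<Suc j. rr i \<le> vs.dim (A i)) \<and> (\<Sum>i<Suc j. rr i) = r
           \<and> (\<Sum>i<Suc j. Mr emb b m n (A i) (rr i)) \<le> Mr emb b m n (itsum A (Suc j)) r"
    if r: "r \<le> vs.dim (itsum A (Suc j))" for r
  proof -
    have "r \<le> vs.dim (sms ?AA (A j))" using r by simp
    from two_ge[OF X(1) Y(1) XY AA Aj this Y(2)] obtain r1 r2 where
      rs: "r1 \<le> vs.dim ?AA" "r2 \<le> vs.dim (A j)" "r1 + r2 = r"
        "Mr emb b m n ?AA r1 + Mr emb b m n (A j) r2 \<le> Mr emb b m n (sms ?AA (A j)) r" by blast
    from IH rs(1) obtain rr where rr: "\<forall>i<j. rr i \<le> vs.dim (A i)" "(\<Sum>i<j. rr i) = r1"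
      "(\<Sum>i<j. Mr emb b m n (A i) (rr i)) \<le> Mr emb b m n ?AA r1" by blast
    define rr' where "rr' = rr(j := r2)"
    have e1: "(\<Sum>i<j. rr' i) = (\<Sum>i<j. rr i)" unfolding rr'_def by (intro sum.cong) auto
    have e2: "(\<Sum>i<j. Mr emb b m n (A i) (rr' i)) = (\<Sum>i<j. Mr emb b m n (A i) (rr i))"
      unfolding rr'_def by (intro sum.cong) auto
    have "\<forall>i<Suc j. rr' i \<le> vs.dim (A i)" using rr(1) rs(2) by (auto simp: rr'_def less_Suc_eq)
    moreover have "(\<Sum>i<Suc j. rr' i) = r" using e1 rr(2) rs(3) by (simp add: rr'_def)
    moreover have "(\<Sum>i<Suc j. Mr emb b m n (A i) (rr' i)) \<le> Mr emb b m n (itsum A (Suc j)) r"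
      using e2 rr(3) rs(4) by (simp add: rr'_def)
    ultimately show ?thesis by blast
  qed
  show ?case using p1 p2 p3 p4 p5 p6 p7 by blast
qed

end

declare plus_fun_apply [simp del] zero_fun_apply [simp del]

lemma funpow_hom:
  assumes "module_hom (sc :: 'a::field \<Rightarrow> (nat \<Rightarrow> 'a) \<Rightarrow> _) sc u"
  shows "module_hom (sc :: 'a::field \<Rightarrow> (nat \<Rightarrow> 'a) \<Rightarrow> _) sc (u ^^ k)"
proof (induction k)
  case 0 then show ?case using module_sc by (simp add: module_hom_iff)
next
  case (Suc k)
  then show ?case using assms module_sc by (simp add: module_hom_iff)
qed

lemma poly_endo_sumN:
  assumes "\<forall>k\<ge>N. coeff p k = 0"
  shows "poly_endo p u v = (\<Sum>k<N. sc (coeff p k) ((u ^^ k) v))"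
proof -
  have z: "sc (0::'a::field) w = 0" for w :: "nat \<Rightarrow> 'a" by (rule vs.scale_zero_left)
  let ?M = "max N (Suc (degree p))"
  have "poly_endo p u v = (\<Sum>k<Suc (degree p). sc (coeff p k) ((u ^^ k) v))"
    by (simp add: poly_endo_def lessThan_Suc_atMost)
  also have "\<dots> = (\<Sum>k<?M. sc (coeff p k) ((u ^^ k) v))"
    by (rule sum.mono_neutral_left) (auto simp: z coeff_eq_0)
  also have "\<dots> = (\<Sum>k<N. sc (coeff p k) ((u ^^ k) v))"
    by (rule sum.mono_neutral_right) (use assms in \<open>auto simp: z\<close>)
  finally show ?thesis .
qed

context
  fixes u :: "(nat \<Rightarrow> 'a::field) \<Rightarrow> (nat \<Rightarrow> 'a)"
  assumes u: "module_hom sc sc u"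
begin

interpretation U: module_hom sc sc u by (rule u)

lemma pe_zero_poly[simp]: "poly_endo 0 u v = 0"
  by (simp add: poly_endo_def)

lemma pe_pCons: "poly_endo (pCons a p) u v = sc a v + u (poly_endo p u v)"
proof -
  define N where "N = Suc (degree p)"
  have cp: "\<forall>k\<ge>N. coeff p k = 0" by (auto simp: N_def coeff_eq_0)
  have cq: "\<forall>k\<ge>Suc N. coeff (pCons a p) k = 0" using cp by (auto simp: coeff_pCons split: nat.splits)
  have "poly_endo (pCons a p) u v = (\<Sum>k<Suc N. sc (coeff (pCons a p) k) ((u ^^ k) v))"
    by (rule poly_endo_sumN[OF cq])
  also have "\<dots> = sc a v + (\<Sum>k<N. sc (coeff p k) ((u ^^ Suc k) v))"
    by (subst sum.lessThan_Suc_shift) simp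
  also have "(\<Sum>k<N. sc (coeff p k) ((u ^^ Suc k) v)) = (\<Sum>k<N. u (sc (coeff p k) ((u ^^ k) v)))"
    by (intro sum.cong) (auto simp: U.scale)
  also have "\<dots> = u (\<Sum>k<N. sc (coeff p k) ((u ^^ k) v))" by (simp add: U.sum)
  also have "(\<Sum>k<N. sc (coeff p k) ((u ^^ k) v)) = poly_endo p u v"
    by (rule poly_endo_sumN[OF cp, symmetric])
  finally show ?thesis .
qed

lemma pe_hom: "module_hom sc sc (poly_endo p u)"
proof (induction p)
  case 0 then show ?case using module_sc by (simp add: module_hom_iff)
next
  case (pCons a p)
  interpret P: module_hom sc sc "poly_endo p u" by (rule pCons.IH)
  show ?case using module_sc
    by (simp add: module_hom_iff pe_pCons U.add U.scale P.add P.scale vs.scale_right_distrib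
        vs.scale_left_commute)
qed

lemma pe_add: "poly_endo (p + q) u v = poly_endo p u v + poly_endo q u v"
proof (induction p arbitrary: q)
  case 0 then show ?case by simp
next
  case (pCons a p)
  show ?case
  proof (cases q rule: pCons_cases)
    case (pCons b q')
    show ?thesis using pCons.IH[of q'] unfolding pCons
      by (simp add: pe_pCons U.add vs.scale_left_distrib algebra_simps)
  qed
qed

lemma pe_smult: "poly_endo (smult c p) u v = sc c (poly_endo p u v)"
proof (induction p)
  case 0 then show ?case by simp
next
  case (pCons a p)
  show ?case using pCons.IH
    by (simp add: pe_pCons U.scale vs.scale_right_distrib)
qed

lemma pe_mult: "poly_endo (p * q) u v = poly_endo p u (poly_endo q u v)"
proof (induction p)
  case 0 then show ?case by simp
next
  case (pCons a p)
  have "poly_endo (pCons a p * q) u v = poly_endo (smult a q) u v + poly_endo (pCons 0 (p * q)) u v"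
    by (simp add: pe_add)
  also have "\<dots> = sc a (poly_endo q u v) + u (poly_endo p u (poly_endo q u v))"
    using pCons.IH by (simp add: pe_smult pe_pCons)
  also have "\<dots> = poly_endo (pCons a p) u (poly_endo q u v)" by (simp add: pe_pCons)
  finally show ?case .
qed

lemma pe_one[simp]: "poly_endo 1 u v = v"
  by (simp add: poly_endo_def)

lemma pe_monom: "poly_endo (monom 1 j) u v = (u ^^ j) v"
proof (induction j arbitrary: v)
  case 0 then show ?case by (simp add: monom_0 one_pCons[symmetric])
next
  case (Suc j)
  have "monom (1::'a) (Suc j) = pCons 0 (monom 1 j)" by (simp add: monom_Suc)
  then show ?case using Suc by (simp add: pe_pCons)
qed

lemma pe_funpow: "poly_endo p u ((u ^^ j) v) = (u ^^ j) (poly_endo p u v)"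
proof -
  have "poly_endo p u ((u ^^ j) v) = poly_endo (p * monom 1 j) u v" by (simp add: pe_mult pe_monom)
  also have "\<dots> = poly_endo (monom 1 j * p) u v" by (simp add: mult.commute)
  also have "\<dots> = (u ^^ j) (poly_endo p u v)" by (simp add: pe_mult pe_monom)
  finally show ?thesis .
qed

lemma pe_mod:
  assumes "poly_endo T u w = 0"
  shows "poly_endo q u w = poly_endo (q mod T) u w"
proof -
  have "q = (q div T) * T + q mod T" by simp
  then have "poly_endo q u w = poly_endo ((q div T) * T) u w + poly_endo (q mod T) u w"
    by (metis pe_add)
  also have "poly_endo ((q div T) * T) u w = 0"
    using assms pe_hom[of "q div T"] by (simp add: pe_mult module_hom.zero)
  finally show ?thesis by simp
qed

lemma pe_invariant:
  assumes "vs.subspace V" "u ` V \<subseteq> V" "w \<in> V"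
  shows "poly_endo p u w \<in> V"
proof (induction p)
  case 0 then show ?case using vs.subspace_0[OF assms(1)] by (simp)
next
  case (pCons a p)
  then show ?case using assms by (simp add: pe_pCons vs.subspace_add vs.subspace_scale image_subset_iff)
qed

end

lemma vecmatT_hom: "module_hom sc sc (\<lambda>v. vecmatT n v (A :: nat \<Rightarrow> nat \<Rightarrow> 'a::field))"
  by (rule hom_sc_intro) (auto simp: vecmatT_def fun_eq_iff sc_apply distrib_right sum.distrib sum_distrib_left mult.assoc plus_fun_apply)

lemma vecmatT_vecs: "vecmatT n v A \<in> vecs n"
  by (simp add: vecmatT_def vecs_def)

lemma vecmatT_mult: "vecmatT n c (mat_mult n X A) = vecmatT n (vecmatT n c A) (X :: nat \<Rightarrow> nat \<Rightarrow> 'a::field)"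
proof (rule ext)
  fix j
  show "vecmatT n c (mat_mult n X A) j = vecmatT n (vecmatT n c A) X j"
  proof (cases "j < n")
    case True
    have "vecmatT n c (mat_mult n X A) j = (\<Sum>l<n. c l * (\<Sum>k<n. X j k * A k l))"
      using True by (simp add: vecmatT_def mat_mult_def)
    also have "\<dots> = (\<Sum>l<n. \<Sum>k<n. X j k * (c l * A k l))"
      by (simp add: sum_distrib_left mult.left_commute)
    also have "\<dots> = (\<Sum>k<n. \<Sum>l<n. X j k * (c l * A k l))" by (rule sum.swap)
    also have "\<dots> = (\<Sum>k<n. X j k * vecmatT n c A k)"
      by (intro sum.cong refl) (simp add: vecmatT_def sum_distrib_left)
    also have "\<dots> = vecmatT n (vecmatT n c A) X j" using True by (simp add: vecmatT_def mult.commute)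
    finally show ?thesis .
  qed (simp add: vecmatT_def)
qed

lemma vecmatT_id: "c \<in> vecs n \<Longrightarrow> vecmatT n c mat_id = (c :: nat \<Rightarrow> 'a::field)"
proof (rule ext)
  fix j assume c: "c \<in> vecs n"
  show "vecmatT n c mat_id j = c j"
  proof (cases "j < n")
    case True
    have "vecmatT n c mat_id j = (\<Sum>l<n. if l = j then c l else 0)"
      using True by (simp add: vecmatT_def mat_id_def if_distrib cong: if_cong)
    then show ?thesis using True by simp
  qed (use c in \<open>simp add: vecmatT_def vecs_def\<close>)
qed

lemma vecmatT_pow:
  "c \<in> vecs n \<Longrightarrow> vecmatT n c (mat_pow n A k) = ((\<lambda>v. vecmatT n v (A :: nat \<Rightarrow> nat \<Rightarrow> 'a::field)) ^^ k) c"
proof (induction k arbitrary: c)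
  case 0 then show ?case by (simp add: vecmatT_id)
next
  case (Suc k)
  have "vecmatT n c (mat_pow n A (Suc k)) = vecmatT n (vecmatT n c A) (mat_pow n A k)"
    by (simp add: vecmatT_mult)
  also have "\<dots> = ((\<lambda>v. vecmatT n v A) ^^ k) (vecmatT n c A)"
    using Suc.IH[OF vecmatT_vecs] .
  also have "\<dots> = ((\<lambda>v. vecmatT n v A) ^^ Suc k) c" by (simp only: funpow_Suc_right comp_def)
  finally show ?case .
qed

lemma vecmatT_poly_mat:
  assumes c: "c \<in> vecs n"
  shows "vecmatT n c (poly_mat n p A) = poly_endo p (\<lambda>v. vecmatT n v (A :: nat \<Rightarrow> nat \<Rightarrow> 'a::field)) c"
proof (rule ext)
  fix j
  let ?u = "\<lambda>v. vecmatT n v A"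
  show "vecmatT n c (poly_mat n p A) j = poly_endo p ?u c j"
  proof (cases "j < n")
    case True
    have "vecmatT n c (poly_mat n p A) j = (\<Sum>l<n. c l * (\<Sum>k\<le>degree p. coeff p k * mat_pow n A k j l))"
      using True by (simp add: vecmatT_def poly_mat_def)
    also have "\<dots> = (\<Sum>k\<le>degree p. coeff p k * (\<Sum>l<n. c l * mat_pow n A k j l))"
      by (simp add: sum_distrib_left mult.left_commute sum.swap[of _ "{..<n}"])
    also have "\<dots> = (\<Sum>k\<le>degree p. coeff p k * vecmatT n c (mat_pow n A k) j)"
      using True by (simp add: vecmatT_def)
    also have "\<dots> = (\<Sum>k\<le>degree p. coeff p k * (?u ^^ k) c j)"
      using vecmatT_pow[OF c] by simp
    also have "\<dots> = poly_endo p ?u c j"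
      by (simp add: poly_endo_def sum_apply_fun sc_apply)
    finally show ?thesis .
  next
    case False
    have "poly_endo p ?u c j = (\<Sum>k\<le>degree p. coeff p k * (?u ^^ k) c j)"
      by (simp add: poly_endo_def sum_apply_fun sc_apply)
    also have "\<dots> = 0"
    proof (intro sum.neutral ballI)
      fix k
      have "(?u ^^ k) c \<in> vecs n" by (cases k) (use c vecmatT_vecs in auto)
      then show "coeff p k * (?u ^^ k) c j = 0" using False by (simp add: vecs_def)
    qed
    finally show ?thesis using False by (simp add: vecmatT_def)
  qed
qed

context kb
begin

definition embv :: "(nat \<Rightarrow> 'k) \<Rightarrow> (nat \<Rightarrow> 'l)" where
  "embv v = (\<lambda>j. emb (v j))"

lemma embv_add: "embv (x + y) = embv x + embv y"
  by (simp add: embv_def fun_eq_iff emb_add plus_fun_apply)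

lemma embv_sc: "embv (sc a x) = sc (emb a) (embv x)"
  by (simp add: embv_def fun_eq_iff emb_mult sc_apply)

lemma embv_zero[simp]: "embv 0 = 0"
  by (simp add: embv_def fun_eq_iff zero_fun_apply)

lemma embv_vecs: "v \<in> vecs n \<Longrightarrow> embv v \<in> vecs n"
  by (simp add: embv_def vecs_def)

lemma embv_inj: "embv x = embv y \<Longrightarrow> x = y"
  by (auto simp: embv_def fun_eq_iff intro: emb_inj)

lemma vecmatT_emb: "vecmatT n (embv v) (\<lambda>i j. emb (M i j)) = embv (vecmatT n v M)"
  by (simp add: vecmatT_def embv_def fun_eq_iff emb_sum emb_mult)

lemma funpow_emb:
  "((\<lambda>c. vecmatT n c (\<lambda>i j. emb (M i j))) ^^ k) (embv v) = embv (((\<lambda>v. vecmatT n v M) ^^ k) v)"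
  by (induction k) (simp_all add: vecmatT_emb)

lemma pe_emb:
  "poly_endo (map_poly emb q) (\<lambda>c. vecmatT n c (\<lambda>i j. emb (M i j))) (embv v)
     = embv (poly_endo q (\<lambda>v. vecmatT n v M) v)"
proof (induction q)
  case 0 then show ?case
    by (simp add: poly_endo_def vs.scale_zero_left)
next
  case (pCons a q)
  have "map_poly emb (pCons a q) = pCons (emb a) (map_poly emb q)" by (simp add: map_poly_pCons)
  then show ?case using pCons.IH
    by (simp add: pe_pCons[OF vecmatT_hom] vecmatT_emb embv_add embv_sc)
qed

lemma lmap_embv: "lmap n n' A (embv x) = embv (kmap n n' A x)"
  by (simp add: lmap_def kmap_def embv_def fun_eq_iff emb_sum emb_mult)

end

definition coeffvec :: "'a::zero poly \<Rightarrow> nat \<Rightarrow> 'a" where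
  "coeffvec p = (\<lambda>j. coeff p j)"

definition polyof :: "nat \<Rightarrow> (nat \<Rightarrow> 'a::comm_ring_1) \<Rightarrow> 'a poly" where
  "polyof d a = (\<Sum>j<d. monom (a j) j)"

lemma coeff_polyof: "coeff (polyof d a) k = (if k < d then a k else 0)"
proof -
  have "coeff (polyof d a) k = (\<Sum>j<d. if j = k then a j else 0)"
    by (simp add: polyof_def coeff_sum)
  then show ?thesis by simp
qed

lemma polyof_high: "\<forall>k\<ge>d. coeff (polyof d a) k = 0"
  by (simp add: coeff_polyof)

lemma polyof_coeffvec: "\<forall>k\<ge>d. coeff p k = 0 \<Longrightarrow> polyof d (coeffvec p) = p"
  by (rule poly_eqI) (auto simp: coeff_polyof coeffvec_def)

lemma coeffvec_polyof: "a \<in> vecs d \<Longrightarrow> coeffvec (polyof d a) = a"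
  by (auto simp: coeffvec_def coeff_polyof vecs_def fun_eq_iff)

lemma coeffvec_vecs: "\<forall>k\<ge>d. coeff p k = 0 \<Longrightarrow> coeffvec p \<in> vecs d"
  by (simp add: coeffvec_def vecs_def)

lemma coeffvec_inj: "coeffvec p = coeffvec q \<Longrightarrow> p = q"
  by (rule poly_eqI) (simp add: coeffvec_def fun_eq_iff)

lemma coeffvec_add: "coeffvec (p + q) = coeffvec p + coeffvec q"
  by (simp add: coeffvec_def fun_eq_iff plus_fun_apply)

lemma coeffvec_smult: "coeffvec (smult c p) = sc c (coeffvec p)"
  by (simp add: coeffvec_def fun_eq_iff sc_apply)

lemma coeffvec_0[simp]: "coeffvec 0 = 0"
  by (simp add: coeffvec_def fun_eq_iff zero_fun_apply)

lemma polyof_add: "polyof d (a + b) = polyof d a + polyof d (b :: nat \<Rightarrow> 'a::comm_ring_1)"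
  by (rule poly_eqI) (simp add: coeff_polyof plus_fun_apply)

lemma polyof_sc: "polyof d (sc c a) = smult c (polyof d (a :: nat \<Rightarrow> 'a::field))"
  by (rule poly_eqI) (simp add: coeff_polyof sc_apply)

lemma polyof_0[simp]: "polyof d 0 = 0"
  by (rule poly_eqI) (simp add: coeff_polyof zero_fun_apply)

lemma mod_high: "T \<noteq> 0 \<Longrightarrow> \<forall>k\<ge>degree T. coeff (q mod T) k = (0::'a::field)"
  using degree_mod_less[of T q] by (auto intro: coeff_eq_0)

lemma coeff_mult_high:
  assumes "\<forall>k\<ge>a. coeff p k = 0" "\<forall>k\<ge>c. coeff q k = 0"
  shows "\<forall>k\<ge>a + c - 1. coeff (p * q) k = (0::'a::comm_ring_1)"
proof (intro allI impI)
  fix k assume k: "k \<ge> a + c - 1"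
  show "coeff (p * q) k = 0" unfolding coeff_mult
  proof (intro sum.neutral ballI)
    fix i assume "i \<in> {..k}"
    show "coeff p i * coeff q (k - i) = 0"
    proof (cases "i \<ge> a")
      case True then show ?thesis using assms by simp
    next
      case False
      show ?thesis
      proof (cases "c = 0")
        case True then show ?thesis using assms by simp
      next
        case False
        then have "k - i \<ge> c" using k \<open>\<not> a \<le> i\<close> by linarith
        then show ?thesis using assms by simp
      qed
    qed
  qed
qed

lemma coeff_high_degree: "\<forall>k\<ge>Suc (degree p). coeff p k = 0"
  by (auto intro: coeff_eq_0)

locale pcode =
  fixes T :: "'l::field_gcd poly" and P :: "'l poly"
  assumes T: "lead_coeff T = 1"
begin

definition "G = gcd P T"
definition "g = T div G"
definition "d = degree T"
definition "e = degree G"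

lemma T0: "T \<noteq> 0" using T by auto
lemma G0: "G \<noteq> 0" using T0 by (simp add: G_def)
lemma GT: "G dvd T" by (simp add: G_def)
lemma TgG: "T = g * G" using GT by (simp add: g_def)
lemma g0: "g \<noteq> 0" using TgG T0 by auto
lemma deg_sum: "degree g + e = d"
proof -
  have "degree T = degree (g * G)" using TgG by simp
  also have "\<dots> = degree g + degree G" using g0 G0 by (rule degree_mult_eq)
  finally show ?thesis by (simp add: d_def e_def)
qed
lemma e_le: "e \<le> d" using deg_sum by simp

lemma T_dvd_Pg: "T dvd P * g"
proof -
  have "P = (P div G) * G" by (simp add: G_def)
  then have "P * g = (P div G) * T" using TgG by (metis mult.assoc mult.commute)
  then show ?thesis by simp
qed

lemma g_dvd: "T dvd P * r \<Longrightarrow> g dvd r"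
proof -
  assume h: "T dvd P * r"
  have P: "P = (P div G) * G" by (simp add: G_def)
  have cop: "coprime (P div G) g" unfolding G_def g_def using div_gcd_coprime[of P T] T0 by simp
  have "g * G dvd (P div G) * r * G" using h TgG P by (metis mult.assoc mult.commute)
  then have "g dvd (P div G) * r" using G0 by simp
  then show "g dvd r" using cop coprime_dvd_mult_right_iff[of g "P div G" r] by (simp add: coprime_commute)
qed

definition "code = poly_code T g"

lemma code_eq: "code = {c \<in> vecs d. T dvd P * polyof d c}"
proof safe
  fix c assume "c \<in> code"
  then obtain Q where c: "c = coeffvec ((g * Q) mod T)" by (auto simp: code_def poly_code_def coeffvec_def)
  have hi: "\<forall>k\<ge>d. coeff ((g * Q) mod T) k = 0" using mod_high[OF T0] by (simp add: d_def)
  then show "c \<in> vecs d" using c coeffvec_vecs by blast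
  have "polyof d c = (g * Q) mod T" using c polyof_coeffvec[OF hi] by simp
  moreover have "(P * ((g * Q) mod T)) mod T = 0"
  proof -
    have "(P * ((g * Q) mod T)) mod T = (P * (g * Q)) mod T" by (rule mod_mult_right_eq)
    also have "\<dots> = 0" using T_dvd_Pg by (simp add: mult.assoc[symmetric])
    finally show ?thesis .
  qed
  ultimately show "T dvd P * polyof d c" by (simp add: dvd_eq_mod_eq_0)
next
  fix c assume c: "c \<in> vecs d" "T dvd P * polyof d c"
  obtain Q where Q: "polyof d c = g * Q" using g_dvd[OF c(2)] by (auto elim: dvdE)
  have "(g * Q) mod T = g * Q"
  proof (cases "g * Q = 0")
    case False
    have "degree (polyof d c) < d"
    proof (rule ccontr)
      assume "\<not> degree (polyof d c) < d"
      then have "d \<le> degree (polyof d c)" by simp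
      then have "coeff (polyof d c) (degree (polyof d c)) = 0" using polyof_high[of d c] by blast
      then show False using False Q by simp
    qed
    then show ?thesis using Q by (intro mod_poly_less) (simp add: d_def)
  qed (use g0 in auto)
  then have "c = coeffvec ((g * Q) mod T)" using coeffvec_polyof[OF c(1)] Q by simp
  then show "c \<in> code" by (auto simp: code_def poly_code_def coeffvec_def)
qed

lemma code_vecs: "code \<subseteq> vecs d" using code_eq by auto

lemma code_subspace: "vs.subspace code"
  unfolding code_eq vs.subspace_def
proof (intro conjI ballI allI)
  show "0 \<in> {c \<in> vecs d. T dvd P * polyof d c}" by (simp add: vecs_def zero_fun_apply)
  fix x y assume x: "x \<in> {c \<in> vecs d. T dvd P * polyof d c}" and y: "y \<in> {c \<in> vecs d. T dvd P * polyof d c}"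
  then show "x + y \<in> {c \<in> vecs d. T dvd P * polyof d c}"
    by (auto simp: polyof_add distrib_left vecs_def plus_fun_apply)
next
  fix c x assume x: "x \<in> {c \<in> vecs d. T dvd P * polyof d c}"
  then show "sc c x \<in> {c \<in> vecs d. T dvd P * polyof d c}"
    by (auto simp: polyof_sc vecs_def sc_apply intro: dvd_smult)
qed

definition phi :: "(nat \<Rightarrow> 'l) \<Rightarrow> (nat \<Rightarrow> 'l)" where
  "phi q = coeffvec (g * polyof e q)"

lemma phi_hom: "module_hom sc sc phi"
  by (rule hom_sc_intro) (simp_all add: phi_def polyof_add polyof_sc distrib_left coeffvec_add coeffvec_smult)

lemma phi_high:
  assumes "r \<le> e" "q \<in> vecs r"
  shows "phi q \<in> vecs (degree g + r)"
proof -
  have "polyof e q = polyof r q"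
    using assms by (auto intro!: poly_eqI simp: coeff_polyof vecs_def)
  moreover have "\<forall>k\<ge>Suc (degree g) + r - 1. coeff (g * polyof r q) k = 0"
    by (rule coeff_mult_high[OF coeff_high_degree polyof_high])
  ultimately show ?thesis unfolding phi_def by (intro coeffvec_vecs) simp
qed

lemma phi_code: "q \<in> vecs e \<Longrightarrow> phi q \<in> code"
proof -
  assume q: "q \<in> vecs e"
  have hv: "phi q \<in> vecs d" using phi_high[OF order_refl q] deg_sum by simp
  have "\<forall>k\<ge>d. coeff (g * polyof e q) k = 0"
    using hv by (auto simp: phi_def coeffvec_def vecs_def)
  then have "polyof d (phi q) = g * polyof e q" unfolding phi_def by (rule polyof_coeffvec)
  then have "T dvd P * polyof d (phi q)" using T_dvd_Pg by (simp add: mult.assoc[symmetric])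
  then show ?thesis using hv code_eq by auto
qed

lemma phi_onto: "code \<subseteq> phi ` vecs e"
proof
  fix c assume "c \<in> code"
  then have c: "c \<in> vecs d" "T dvd P * polyof d c" using code_eq by auto
  obtain Q where Q: "polyof d c = g * Q" using g_dvd[OF c(2)] by (auto elim: dvdE)
  have Qh: "\<forall>k\<ge>e. coeff Q k = 0"
  proof (cases "Q = 0")
    case False
    have "degree (polyof d c) < d \<or> polyof d c = 0"
    proof (rule ccontr)
      assume a: "\<not> (degree (polyof d c) < d \<or> polyof d c = 0)"
      then have "d \<le> degree (polyof d c)" by simp
      then have "coeff (polyof d c) (degree (polyof d c)) = 0" using polyof_high[of d c] by blast
      then show False using a by simp
    qed
    then have "degree Q < e" using Q g0 False deg_sum by (auto simp: degree_mult_eq)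
    then show ?thesis by (auto intro: coeff_eq_0)
  qed simp
  have "phi (coeffvec Q) = coeffvec (g * Q)" unfolding phi_def using polyof_coeffvec[OF Qh] by simp
  also have "\<dots> = c" using Q coeffvec_polyof[OF c(1)] by simp
  finally show "c \<in> phi ` vecs e" using coeffvec_vecs[OF Qh] by (metis image_eqI)
qed

lemma phi_inj: "inj_on phi (vecs e)"
proof (rule inj_onI)
  fix x y assume xy: "x \<in> vecs e" "y \<in> vecs e" "phi x = phi y"
  have "g * polyof e x = g * polyof e y" using xy(3) unfolding phi_def by (rule coeffvec_inj)
  then have "polyof e x = polyof e y" using g0 by simp
  then show "x = y" using coeffvec_polyof xy by metis
qed

lemma code_img: "code = phi ` vecs e"
  using phi_onto phi_code by blast

lemma dim_code: "vs.dim code = e"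
proof -
  have "vs.dim (phi ` vecs e) = vs.dim (vecs e :: (nat \<Rightarrow> 'l) set)"
    by (rule vs.dim_inj_image[OF vecs_subspace fdm_vecs hom_lin_on[OF phi_hom] phi_inj])
  then show ?thesis using code_img dim_vecs by simp
qed

lemma singleton_sub:
  assumes "r \<le> e"
  shows "vs.subspace (phi ` vecs r) \<and> phi ` vecs r \<subseteq> code \<and> vs.dim (phi ` vecs r) = r
     \<and> phi ` vecs r \<subseteq> vecs (d - e + r)"
proof -
  interpret H: module_hom sc sc phi by (rule phi_hom)
  have sub: "vecs r \<subseteq> vecs e" using assms by (auto simp: vecs_def)
  have "vs.subspace (phi ` vecs r)" by (rule H.subspace_image[OF vecs_subspace])
  moreover have "phi ` vecs r \<subseteq> code" using sub code_img by auto
  moreover have "vs.dim (phi ` vecs r) = r"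
    using vs.dim_inj_image[OF vecs_subspace fdm_vecs hom_lin_on[OF phi_hom] inj_on_subset[OF phi_inj sub]]
      dim_vecs by simp
  moreover have "degree g + r = d - e + r" using deg_sum by simp
  then have "phi ` vecs r \<subseteq> vecs (d - e + r)" using phi_high[OF assms] by auto
  ultimately show ?thesis by blast
qed

end

locale blk = kb emb b m for emb :: "'k::field \<Rightarrow> 'l::field_gcd" and b m +
  fixes n :: nat and M :: "nat \<Rightarrow> nat \<Rightarrow> 'k" and V :: "(nat \<Rightarrow> 'k) set" and \<Theta> :: "'k poly"
  assumes V: "vs.subspace V" "V \<subseteq> vecs n"
    and inv: "(\<lambda>v. vecmatT n v M) ` V \<subseteq> V"
    and cyc: "cyclic_endo V (\<lambda>v. vecmatT n v M)"
    and minp: "is_min_poly V (\<lambda>v. vecmatT n v M) \<Theta>"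
begin

abbreviation "uK \<equiv> \<lambda>v. vecmatT n v M"
abbreviation "uL \<equiv> \<lambda>c. vecmatT n c (\<lambda>i j. emb (M i j))"

lemma uK_hom: "module_hom sc sc uK" by (rule vecmatT_hom)
lemma uL_hom: "module_hom sc sc uL" by (rule vecmatT_hom)

definition "w = (SOME w. w \<in> V \<and> vs.span ((\<lambda>j. (uK ^^ j) w) ` {..<vs.dim V}) = V)"

lemma w: "w \<in> V" "vs.span ((\<lambda>j. (uK ^^ j) w) ` {..<vs.dim V}) = V"
proof -
  have "\<exists>w. w \<in> V \<and> vs.span ((\<lambda>j. (uK ^^ j) w) ` {..<vs.dim V}) = V"
    using cyc unfolding cyclic_endo_def Let_def by blast
  from someI_ex[OF this] show "w \<in> V" "vs.span ((\<lambda>j. (uK ^^ j) w) ` {..<vs.dim V}) = V"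
    unfolding w_def by blast+
qed

definition "d = degree \<Theta>"
definition "Aw = (\<lambda>l j. (uK ^^ j) w l)"
definition "psi = kmap n d Aw"
definition "F = lmap n d Aw"
definition "Th = map_poly emb \<Theta>"

lemma Th_lead: "lead_coeff \<Theta> = 1" using minp by (simp add: is_min_poly_def)
lemma Th_ann: "v \<in> V \<Longrightarrow> poly_endo \<Theta> uK v = 0" using minp by (simp add: is_min_poly_def)
lemma Th_div: "(\<forall>v\<in>V. poly_endo q uK v = 0) \<Longrightarrow> \<Theta> dvd q" using minp by (simp add: is_min_poly_def)

lemma funpow_V: "(uK ^^ j) w \<in> V"
  by (induction j) (use w(1) inv in auto)

lemma funpow_vecs: "(uK ^^ j) w \<in> vecs n" using funpow_V V(2) by blast

lemma psi_eq: "psi a = poly_endo (polyof d a) uK w"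
proof -
  have "poly_endo (polyof d a) uK w = (\<Sum>k<d. sc (coeff (polyof d a) k) ((uK ^^ k) w))"
    by (rule poly_endo_sumN[OF polyof_high])
  also have "\<dots> = (\<Sum>k<d. sc (a k) ((uK ^^ k) w))" by (simp add: coeff_polyof)
  finally have e: "poly_endo (polyof d a) uK w = (\<Sum>k<d. sc (a k) ((uK ^^ k) w))" .
  show ?thesis
  proof (rule ext)
    fix l
    show "psi a l = poly_endo (polyof d a) uK w l"
    proof (cases "l < n")
      case True then show ?thesis
        by (simp add: e psi_def kmap_def Aw_def sum_apply_fun sc_apply mult.commute)
    next
      case False
      have "(\<Sum>k<d. sc (a k) ((uK ^^ k) w)) l = 0"
        using funpow_vecs False by (simp add: sum_apply_fun sc_apply vecs_def)
      then show ?thesis using False by (simp add: e psi_def kmap_def)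
    qed
  qed
qed

lemma kill:
  assumes "poly_endo p uK w = 0" "v \<in> V"
  shows "poly_endo p uK v = 0"
proof -
  interpret PE: module_hom sc sc "poly_endo p uK" by (rule pe_hom[OF uK_hom])
  have vin: "v \<in> vs.span ((\<lambda>j. (uK ^^ j) w) ` {..<vs.dim V})" using w(2) assms(2) by simp
  have sub: "vs.subspace {v. poly_endo p uK v = 0}" by (rule PE.subspace_kernel)
  have base: "poly_endo p uK x = 0" if "x \<in> (\<lambda>j. (uK ^^ j) w) ` {..<vs.dim V}" for x
  proof -
    from that obtain j where j: "x = (uK ^^ j) w" by auto
    have "poly_endo p uK x = (uK ^^ j) (poly_endo p uK w)" unfolding j by (rule pe_funpow[OF uK_hom])
    also have "\<dots> = 0" using assms(1) module_hom.zero[OF funpow_hom[OF uK_hom, of j]] by simp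
    finally show ?thesis .
  qed
  show ?thesis using vs.span_induct[OF vin, where P = "\<lambda>v. poly_endo p uK v = 0"] sub base by blast
qed

lemma polyof_degree: "polyof d a \<noteq> 0 \<Longrightarrow> degree (polyof d a) < d"
proof (rule ccontr)
  assume a: "polyof d a \<noteq> 0" "\<not> degree (polyof d a) < d"
  then have "d \<le> degree (polyof d a)" by simp
  then have "coeff (polyof d a) (degree (polyof d a)) = 0" using polyof_high[of d a] by blast
  then show False using a by simp
qed

lemma psi_hom: "module_hom sc sc psi" unfolding psi_def by (rule kmap_hom)

lemma psi_inj: "inj_on psi (vecs d)"
proof (rule inj_onI)
  interpret PS: module_hom sc sc psi by (rule psi_hom)
  fix x y assume xy: "x \<in> vecs d" "y \<in> vecs d" "psi x = psi y"
  have xv: "x - y \<in> vecs d" using xy by (simp add: vecs_def)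
  have "psi (x - y) = 0" using xy PS.diff by simp
  then have "poly_endo (polyof d (x - y)) uK w = 0" by (simp add: psi_eq)
  then have "\<forall>v\<in>V. poly_endo (polyof d (x - y)) uK v = 0" using kill by blast
  then have dv: "\<Theta> dvd polyof d (x - y)" by (rule Th_div)
  have "polyof d (x - y) = 0"
  proof (rule ccontr)
    assume nz: "polyof d (x - y) \<noteq> 0"
    have "degree \<Theta> \<le> degree (polyof d (x - y))" using dv nz by (rule dvd_imp_degree_le)
    then show False using polyof_degree[OF nz] by (simp add: d_def)
  qed
  then have "x - y = 0" using coeffvec_polyof[OF xv] by simp
  then show "x = y" by simp
qed

lemma psi_V: "psi a \<in> V"
  unfolding psi_eq by (rule pe_invariant[OF uK_hom V(1) inv w(1)])

lemma psi_onto: "v \<in> V \<Longrightarrow> \<exists>a\<in>vecs d. v = psi a"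
proof -
  assume v: "v \<in> V"
  let ?Q = "{poly_endo q uK w | q. True}"
  have sQ: "vs.subspace ?Q"
    unfolding vs.subspace_def
  proof (intro conjI ballI allI)
    have "0 = poly_endo 0 uK w" by (simp add: pe_zero_poly[OF uK_hom])
    then show "0 \<in> ?Q" by blast
    fix x y assume "x \<in> ?Q" "y \<in> ?Q"
    then obtain p q where "x = poly_endo p uK w" "y = poly_endo q uK w" by blast
    then have "x + y = poly_endo (p + q) uK w" by (simp add: pe_add[OF uK_hom])
    then show "x + y \<in> ?Q" by blast
  next
    fix c x assume "x \<in> ?Q"
    then obtain p where "x = poly_endo p uK w" by blast
    then have "sc c x = poly_endo (smult c p) uK w" by (simp add: pe_smult[OF uK_hom])
    then show "sc c x \<in> ?Q" by blast
  qed
  have "(\<lambda>j. (uK ^^ j) w) ` {..<vs.dim V} \<subseteq> ?Q"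
  proof
    fix x assume "x \<in> (\<lambda>j. (uK ^^ j) w) ` {..<vs.dim V}"
    then obtain j where "x = (uK ^^ j) w" by auto
    then have "x = poly_endo (monom 1 j) uK w" by (simp add: pe_monom[OF uK_hom])
    then show "x \<in> ?Q" by blast
  qed
  from vs.span_minimal[OF this sQ] have "V \<subseteq> ?Q" using w(2) by simp
  then obtain q where q: "v = poly_endo q uK w" using v by blast
  have T0: "\<Theta> \<noteq> 0" using Th_lead by auto
  have hi: "\<forall>k\<ge>d. coeff (q mod \<Theta>) k = 0" using mod_high[OF T0] by (simp add: d_def)
  have "v = poly_endo (q mod \<Theta>) uK w" using q pe_mod[OF uK_hom Th_ann[OF w(1)]] by simp
  also have "\<dots> = psi (coeffvec (q mod \<Theta>))" using psi_eq polyof_coeffvec[OF hi] by simp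
  finally show ?thesis using coeffvec_vecs[OF hi] by blast
qed

lemma Th_monic: "lead_coeff Th = 1"
proof -
  have "degree Th = degree \<Theta>" unfolding Th_def by (rule degree_map_poly) simp
  then show ?thesis using Th_lead by (simp add: Th_def coeff_map_poly)
qed

lemma deg_Th: "degree Th = d"
  unfolding Th_def d_def by (rule degree_map_poly) simp

lemma Th_w: "poly_endo Th uL (embv w) = 0"
  unfolding Th_def using pe_emb[of \<Theta> n M w] Th_ann[OF w(1)] by simp

lemma F_eq: "F c = poly_endo (polyof d c) uL (embv w)"
proof -
  have "poly_endo (polyof d c) uL (embv w) = (\<Sum>k<d. sc (coeff (polyof d c) k) ((uL ^^ k) (embv w)))"
    by (rule poly_endo_sumN[OF polyof_high])
  also have "\<dots> = (\<Sum>k<d. sc (c k) (embv ((uK ^^ k) w)))" by (simp add: coeff_polyof funpow_emb)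
  finally have e: "poly_endo (polyof d c) uL (embv w) = (\<Sum>k<d. sc (c k) (embv ((uK ^^ k) w)))" .
  show ?thesis
  proof (rule ext)
    fix l
    show "F c l = poly_endo (polyof d c) uL (embv w) l"
      unfolding e
    proof (cases "l < n")
      case True then show "F c l = (\<Sum>k<d. sc (c k) (embv ((uK ^^ k) w))) l"
        by (simp add: F_def lmap_def Aw_def sum_apply_fun sc_apply embv_def mult.commute)
    next
      case False
      have "(\<Sum>k<d. sc (c k) (embv ((uK ^^ k) w))) l = 0"
        using funpow_vecs False by (simp add: sum_apply_fun sc_apply vecs_def embv_def)
      then show "F c l = (\<Sum>k<d. sc (c k) (embv ((uK ^^ k) w))) l" using False by (simp add: F_def lmap_def)
    qed
  qed
qed

lemma F_hom: "module_hom sc sc F" unfolding F_def by (rule lmap_hom)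

lemma F_inj: "inj_on F (vecs d)"
  unfolding F_def by (rule lmap_inj) (use psi_inj in \<open>simp add: psi_def\<close>)

lemma F_vecs: "F c \<in> vecs n" unfolding F_def by (rule lmap_vecs)

lemma F_rowv: "rowv n (F c) s = psi (rowv d c s)"
  unfolding F_def psi_def by (rule rowv_lmap)

lemma F_Ext: "F c \<in> Ext n V"
  using F_vecs F_rowv psi_V by (auto simp: Ext_def)

lemma F_embv: "F (embv a) = embv (psi a)"
  unfolding F_def psi_def by (rule lmap_embv)

lemma F_P: "poly_endo P uL (F c) = F (coeffvec ((P * polyof d c) mod Th))"
proof -
  have T0: "Th \<noteq> 0" using Th_monic by auto
  have hi: "\<forall>k\<ge>d. coeff ((P * polyof d c) mod Th) k = 0" using mod_high[OF T0] deg_Th by simp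
  have "poly_endo P uL (F c) = poly_endo (P * polyof d c) uL (embv w)"
    by (simp add: F_eq pe_mult[OF uL_hom])
  also have "\<dots> = poly_endo ((P * polyof d c) mod Th) uL (embv w)"
    by (rule pe_mod[OF uL_hom Th_w])
  also have "\<dots> = F (coeffvec ((P * polyof d c) mod Th))"
    by (simp add: F_eq polyof_coeffvec[OF hi])
  finally show ?thesis .
qed

lemma code_iff:
  assumes "c \<in> vecs d"
  shows "c \<in> pcode.code Th P \<longleftrightarrow> (P * polyof d c) mod Th = 0"
proof -
  interpret pc: pcode Th P by unfold_locales (rule Th_monic)
  have "pc.d = d" by (simp add: pc.d_def deg_Th)
  then show ?thesis using pc.code_eq assms by (auto simp: dvd_eq_mod_eq_0)
qed

end

lemma itsum_repr: "x \<in> itsum A j \<longleftrightarrow> (\<exists>a. (\<forall>i<j. a i \<in> A i) \<and> x = (\<Sum>i<j. a i))"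
proof (induction j arbitrary: x)
  case 0 then show ?case by simp
next
  case (Suc j)
  show ?case
  proof
    assume "x \<in> itsum A (Suc j)"
    then obtain y z where yz: "x = y + z" "y \<in> itsum A j" "z \<in> A j" by (auto simp: sms_def)
    then obtain a where a: "\<forall>i<j. a i \<in> A i" "y = (\<Sum>i<j. a i)" using Suc.IH by blast
    let ?a = "a(j := z)"
    have "(\<Sum>i<j. ?a i) = (\<Sum>i<j. a i)" by (intro sum.cong) auto
    then have "x = (\<Sum>i<Suc j. ?a i)" using yz a by simp
    moreover have "\<forall>i<Suc j. ?a i \<in> A i" using a yz by (auto simp: less_Suc_eq)
    ultimately show "\<exists>a. (\<forall>i<Suc j. a i \<in> A i) \<and> x = (\<Sum>i<Suc j. a i)" by blast
  next
    assume "\<exists>a. (\<forall>i<Suc j. a i \<in> A i) \<and> x = (\<Sum>i<Suc j. a i)"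
    then obtain a where a: "\<forall>i<Suc j. a i \<in> A i" "x = (\<Sum>i<Suc j. a i)" by blast
    have "(\<Sum>i<j. a i) \<in> itsum A j" unfolding Suc.IH using a(1) by (intro exI[of _ a]) auto
    moreover have "a j \<in> A j" using a(1) by simp
    moreover have "x = (\<Sum>i<j. a i) + a j" using a(2) by simp
    ultimately show "x \<in> itsum A (Suc j)" by (auto simp: sms_def)
  qed
qed

lemma (in kb) embv_sum: "embv (\<Sum>i\<in>I. f i) = (\<Sum>i\<in>I. embv (f i))"
  by (induction I rule: infinite_finite_induct) (simp_all add: embv_add)

lemma (in kb) RS_sub: "D \<subseteq> vecs N \<Longrightarrow> RS n D \<subseteq> vecs N"
  by (auto simp: RS_def rowv_def vecs_def)

lemma (in kb) c_decomp:
  assumes "c \<in> vecs n"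
  shows "c = (\<Sum>s<m. sc (b s) (embv (rowv n c s)))"
proof (rule ext)
  fix l
  show "c l = (\<Sum>s<m. sc (b s) (embv (rowv n c s))) l"
  proof (cases "l < n")
    case True
    have "c l = (\<Sum>j<m. emb (crd (c l) j) * b j)" using crd_spec by metis
    then show ?thesis using True by (simp add: sum_apply_fun sc_apply embv_def rowv_def mult.commute)
  next
    case False
    then show ?thesis using assms by (simp add: sum_apply_fun sc_apply embv_def rowv_def vecs_def)
  qed
qed

locale mainloc = kb emb b m for emb :: "'k::field \<Rightarrow> 'l::field_gcd" and b m +
  fixes n t :: nat and M :: "nat \<Rightarrow> nat \<Rightarrow> 'k" and V :: "nat \<Rightarrow> (nat \<Rightarrow> 'k) set"
    and \<Theta> :: "nat \<Rightarrow> 'k poly" and P :: "'l poly"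
  assumes V_sub: "\<forall>i<t. vs.subspace (V i) \<and> V i \<subseteq> vecs n"
    and dsum: "\<forall>v\<in>vecs n. \<exists>!f. (\<forall>i. i \<ge> t \<longrightarrow> f i = 0) \<and> (\<forall>i<t. f i \<in> V i) \<and> v = (\<Sum>i<t. f i)"
    and inv: "\<forall>i<t. (\<lambda>v. vecmatT n v M) ` V i \<subseteq> V i"
    and cyc: "\<forall>i<t. cyclic_endo (V i) (\<lambda>v. vecmatT n v M)"
    and minp: "\<forall>i<t. is_min_poly (V i) (\<lambda>v. vecmatT n v M) (\<Theta> i)"
begin

lemma blk_i: "i < t \<Longrightarrow> blk emb b m n M (V i) (\<Theta> i)"
  unfolding blk_def blk_axioms_def using kb_axioms V_sub inv cyc minp by blast

definition "dd i = degree (\<Theta> i)"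
definition "FF i = blk.F emb n M (V i) (\<Theta> i)"
definition "PS i = blk.psi n M (V i) (\<Theta> i)"
definition "TT i = map_poly emb (\<Theta> i)"
definition "CD i = poly_code (TT i) (TT i div gcd P (TT i))"
definition "AA i = FF i ` CD i"

abbreviation "uL \<equiv> \<lambda>c. vecmatT n c (\<lambda>i j. emb (M i j))"

lemma blk_facts:
  assumes i: "i < t"
  shows "module_hom sc sc (FF i)" "inj_on (FF i) (vecs (dd i))" "\<And>c. FF i c \<in> vecs n"
    "\<And>c s. rowv n (FF i c) s = PS i (rowv (dd i) c s)" "\<And>a. PS i a \<in> V i"
    "inj_on (PS i) (vecs (dd i))" "\<And>a. FF i (embv a) = embv (PS i a)"
    "\<And>v. v \<in> V i \<Longrightarrow> \<exists>a\<in>vecs (dd i). v = PS i a"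
    "\<And>c. poly_endo P uL (FF i c) = FF i (coeffvec ((P * polyof (dd i) c) mod TT i))"
    "\<And>c. c \<in> vecs (dd i) \<Longrightarrow> c \<in> CD i \<longleftrightarrow> (P * polyof (dd i) c) mod TT i = 0"
    "lead_coeff (TT i) = 1" "degree (TT i) = dd i"
    "FF i = lmap n (dd i) (blk.Aw n M (V i))" "PS i = kmap n (dd i) (blk.Aw n M (V i))"
    "\<And>c. FF i c \<in> Ext n (V i)"
proof -
  interpret B: blk emb b m n M "V i" "\<Theta> i" by (rule blk_i[OF i])
  have dd: "dd i = B.d" by (simp add: dd_def B.d_def)
  have TT: "TT i = B.Th" by (simp add: TT_def B.Th_def)
  show "module_hom sc sc (FF i)" unfolding FF_def by (rule B.F_hom)
  show "inj_on (FF i) (vecs (dd i))" unfolding FF_def dd by (rule B.F_inj)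
  show "\<And>c. FF i c \<in> vecs n" unfolding FF_def by (rule B.F_vecs)
  show "\<And>c s. rowv n (FF i c) s = PS i (rowv (dd i) c s)" unfolding FF_def PS_def dd by (rule B.F_rowv)
  show "\<And>a. PS i a \<in> V i" unfolding PS_def by (rule B.psi_V)
  show "inj_on (PS i) (vecs (dd i))" unfolding PS_def dd by (rule B.psi_inj)
  show "\<And>a. FF i (embv a) = embv (PS i a)" unfolding FF_def PS_def by (rule B.F_embv)
  show "\<And>v. v \<in> V i \<Longrightarrow> \<exists>a\<in>vecs (dd i). v = PS i a" unfolding PS_def dd by (rule B.psi_onto)
  show "\<And>c. poly_endo P uL (FF i c) = FF i (coeffvec ((P * polyof (dd i) c) mod TT i))"
    unfolding FF_def dd TT by (rule B.F_P)
  have cd: "CD i = pcode.code B.Th P"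
  proof -
    interpret pc: pcode B.Th P by unfold_locales (rule B.Th_monic)
    show ?thesis by (simp add: CD_def TT pc.code_def pc.g_def pc.G_def)
  qed
  show "\<And>c. c \<in> vecs (dd i) \<Longrightarrow> c \<in> CD i \<longleftrightarrow> (P * polyof (dd i) c) mod TT i = 0"
    unfolding cd dd TT by (rule B.code_iff)
  show "lead_coeff (TT i) = 1" unfolding TT by (rule B.Th_monic)
  show "degree (TT i) = dd i" unfolding TT dd by (rule B.deg_Th)
  show "FF i = lmap n (dd i) (blk.Aw n M (V i))" unfolding FF_def dd B.F_def ..
  show "PS i = kmap n (dd i) (blk.Aw n M (V i))" unfolding PS_def dd B.psi_def ..
  show "\<And>c. FF i c \<in> Ext n (V i)" unfolding FF_def by (rule B.F_Ext)
qed

lemma zero_vecs: "0 \<in> vecs n" by (simp add: vecs_def zero_fun_apply)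

lemma indep: "\<forall>i<t. itsum V i \<inter> V i = {0}"
proof (intro allI impI)
  fix i assume it: "i < t"
  have "x = 0" if x: "x \<in> itsum V i" "x \<in> V i" for x
  proof -
    obtain f where f: "\<forall>j<i. f j \<in> V j" "x = (\<Sum>j<i. f j)" using x(1) itsum_repr by blast
    define h where "h j = (if j < i then f j else if j = i then - x else 0)" for j
    have "(\<Sum>j<t. h j) = (\<Sum>j<t. (if j < i then f j else 0)) + (\<Sum>j<t. (if j = i then - x else 0))"
      by (subst sum.distrib[symmetric]) (auto simp: h_def intro!: sum.cong)
    also have "(\<Sum>j<t. (if j < i then f j else 0)) = (\<Sum>j<i. f j)"
      using it by (subst sum.inter_filter[symmetric]) (auto intro!: sum.cong)
    also have "(\<Sum>j<t. (if j = i then - x else 0)) = - x" using it by simp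
    finally have "(\<Sum>j<t. h j) = (\<Sum>j<i. f j) + - x" .
    then have s0: "(\<Sum>j<t. h j) = 0" by (simp only: f(2)[symmetric] right_minus)
    have hV: "\<forall>j<t. h j \<in> V j"
    proof (intro allI impI)
      fix j assume jt: "j < t"
      have sj: "vs.subspace (V j)" using V_sub jt by blast
      show "h j \<in> V j"
      proof (cases "j < i")
        case True then show ?thesis using f(1) by (simp add: h_def)
      next
        case False
        show ?thesis
        proof (cases "j = i")
          case True then show ?thesis using x(2) vs.subspace_neg[OF sj] False by (simp add: h_def)
        next
          case False2: False
          then show ?thesis using vs.subspace_0[OF sj] False by (simp add: h_def)
        qed
      qed
    qed
    have hz: "\<forall>j. j \<ge> t \<longrightarrow> h j = 0" using it by (auto simp: h_def)
    have zV: "\<forall>j<t. (0::nat\<Rightarrow>'k) \<in> V j" using V_sub vs.subspace_0 by blast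
    from dsum zero_vecs obtain g where "\<forall>f. ((\<forall>j. j \<ge> t \<longrightarrow> f j = 0) \<and> (\<forall>j<t. f j \<in> V j) \<and> 0 = (\<Sum>j<t. f j)) \<longleftrightarrow> f = g"
      by (metis (no_types, lifting))
    then have "h = g" "(\<lambda>j. 0) = g" using hV hz s0 zV by auto
    then have "h i = 0" by metis
    then show "x = 0" using it by (simp add: h_def)
  qed
  moreover have "(0::nat\<Rightarrow>'k) \<in> itsum V i"
  proof -
    have z: "\<forall>j<i. (0::nat\<Rightarrow>'k) \<in> V j" using V_sub it vs.subspace_0 by (meson less_trans)
    show ?thesis unfolding itsum_repr by (rule exI[of _ "\<lambda>j. 0"]) (use z in auto)
  qed
  moreover have "(0::nat\<Rightarrow>'k) \<in> V i" using V_sub it vs.subspace_0 by blast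
  ultimately show "itsum V i \<inter> V i = {0}" by blast
qed

end

lemma ex1_eq: "\<exists>!x. Q x \<Longrightarrow> Q a \<Longrightarrow> Q c \<Longrightarrow> a = c" by blast

context mainloc
begin

lemma dsum_unique:
  assumes "\<forall>i. i \<ge> t \<longrightarrow> f i = 0" "\<forall>i<t. f i \<in> V i" "\<forall>i. i \<ge> t \<longrightarrow> g i = 0" "\<forall>i<t. g i \<in> V i"
    "v = (\<Sum>i<t. f i)" "v = (\<Sum>i<t. g i)" "v \<in> vecs n"
  shows "f = g"
proof -
  have ex: "\<exists>!h. (\<forall>i. i \<ge> t \<longrightarrow> h i = 0) \<and> (\<forall>i<t. h i \<in> V i) \<and> v = (\<Sum>i<t. h i)"
    by (rule bspec[OF dsum assms(7)])
  show ?thesis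
    by (rule ex1_eq[where Q = "\<lambda>h. (\<forall>i. i \<ge> t \<longrightarrow> h i = 0) \<and> (\<forall>i<t. h i \<in> V i) \<and> v = (\<Sum>i<t. h i)", OF ex])
      (use assms in auto)
qed

lemma uniq:
  assumes x: "\<forall>i<t. x i \<in> vecs (dd i)" and s: "(\<Sum>i<t. FF i (x i)) = 0"
  shows "\<forall>i<t. x i = 0"
proof -
  have rows0: "rowv (dd i) (x i) s = 0" if it: "i < t" and sm: "s < m" for i s
  proof -
    have "rowv n (\<Sum>i<t. FF i (x i)) s = 0" using s by simp
    also have "rowv n (\<Sum>i<t. FF i (x i)) s = (\<Sum>i<t. rowv n (FF i (x i)) s)" by (rule rowv_sum)
    also have "\<dots> = (\<Sum>i<t. PS i (rowv (dd i) (x i) s))"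
    proof (rule sum.cong[OF refl])
      fix j assume "j \<in> {..<t}"
      then show "rowv n (FF j (x j)) s = PS j (rowv (dd j) (x j) s)" using blk_facts(4) by simp
    qed
    finally have s0: "(\<Sum>i<t. PS i (rowv (dd i) (x i) s)) = 0" .
    define f1 where "f1 j = (if j < t then PS j (rowv (dd j) (x j) s) else 0)" for j
    have "(\<Sum>j<t. f1 j) = (\<Sum>i<t. PS i (rowv (dd i) (x i) s))"
      by (rule sum.cong[OF refl]) (simp add: f1_def)
    then have f1s: "0 = (\<Sum>j<t. f1 j)" using s0 by simp
    have f1V: "\<forall>j<t. f1 j \<in> V j" using blk_facts(5) by (simp add: f1_def)
    have f1z: "\<forall>j. j \<ge> t \<longrightarrow> f1 j = 0" by (simp add: f1_def)
    have f1: "(\<forall>j. j \<ge> t \<longrightarrow> f1 j = 0) \<and> (\<forall>j<t. f1 j \<in> V j) \<and> 0 = (\<Sum>j<t. f1 j)"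
      using f1s f1V f1z by blast
    have zV: "\<forall>j<t. (0::nat\<Rightarrow>'k) \<in> V j" using V_sub vs.subspace_0 by blast
    have f2: "(\<forall>j. j \<ge> t \<longrightarrow> (\<lambda>j. 0::nat\<Rightarrow>'k) j = 0) \<and> (\<forall>j<t. (\<lambda>j. 0::nat\<Rightarrow>'k) j \<in> V j) \<and> (0::nat\<Rightarrow>'k) = (\<Sum>j<t. (\<lambda>j. 0::nat\<Rightarrow>'k) j)"
      using zV by simp
    have "f1 = (\<lambda>j. 0)"
      by (rule dsum_unique[where v = 0]) (use f1 zV zero_vecs in auto)
    then have "f1 i = 0" by simp
    then have "PS i (rowv (dd i) (x i) s) = 0" using it by (simp add: f1_def)
    moreover have "PS i 0 = 0"
      by (simp add: blk_facts(14)[OF it] module_hom.zero[OF kmap_hom])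
    ultimately have "PS i (rowv (dd i) (x i) s) = PS i 0" by simp
    from inj_onD[OF blk_facts(6)[OF it] this rowv_vecs] show ?thesis
      using vs.subspace_0[OF vecs_subspace] by blast
  qed
  show ?thesis
  proof (intro allI impI)
    fix i assume it: "i < t"
    have "x i \<in> vecs (dd i)" using x it by blast
    moreover have "\<forall>s<m. rowv (dd i) (x i) s = 0" using rows0 it by blast
    ultimately show "x i = 0" by (rule rowv_eq0)
  qed
qed

lemma CC_eq: "{c \<in> vecs n. vecmatT n c (poly_mat n P (\<lambda>i j. emb (M i j))) = 0} = itsum AA t"
proof safe
  fix c assume c: "c \<in> itsum AA t"
  then obtain a where a: "\<forall>i<t. a i \<in> AA i" "c = (\<Sum>i<t. a i)" unfolding itsum_repr by blast
  have "\<forall>i\<in>{..<t}. \<exists>e. e \<in> CD i \<and> a i = FF i e" using a(1) by (auto simp: AA_def)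
  from bchoice[OF this] obtain e where e: "\<forall>i\<in>{..<t}. e i \<in> CD i \<and> a i = FF i (e i)" by blast
  have av: "a i \<in> vecs n" if "i \<in> {..<t}" for i
  proof -
    have "a i = FF i (e i)" using e that by blast
    then show ?thesis using blk_facts(3)[of i "e i"] that by simp
  qed
  have cv: "c \<in> vecs n" unfolding a(2)
    by (rule vs.subspace_sum[OF vecs_subspace]) (rule av)
  then show "c \<in> vecs n" .
  have "vecmatT n c (poly_mat n P (\<lambda>i j. emb (M i j))) = poly_endo P uL c"
    by (rule vecmatT_poly_mat[OF cv])
  also have "\<dots> = (\<Sum>i<t. poly_endo P uL (a i))"
    unfolding a(2) by (rule module_hom.sum[OF pe_hom[OF vecmatT_hom]])
  also have "\<dots> = (\<Sum>i<t. 0)"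
  proof (intro sum.cong refl)
    fix i assume "i \<in> {..<t}"
    then have it: "i < t" by simp
    have ei: "e i \<in> CD i" "a i = FF i (e i)" using e \<open>i \<in> {..<t}\<close> by blast+
    have evec: "e i \<in> vecs (dd i)"
    proof -
      interpret pc: pcode "TT i" P by unfold_locales (rule blk_facts(11)[OF it])
      have "pc.d = dd i" by (simp add: pc.d_def blk_facts(12)[OF it])
      have "CD i = pc.code" by (simp add: CD_def pc.code_def pc.g_def pc.G_def)
      then show ?thesis using pc.code_vecs ei(1) \<open>pc.d = dd i\<close> by auto
    qed
    have "(P * polyof (dd i) (e i)) mod TT i = 0" using blk_facts(10)[OF it evec] ei(1) by simp
    then show "poly_endo P uL (a i) = 0"
      using ei(2) blk_facts(9)[OF it] module_hom.zero[OF blk_facts(1)[OF it]] by simp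
  qed
  finally show "vecmatT n c (poly_mat n P (\<lambda>i j. emb (M i j))) = 0" by simp
next
  fix c assume cv: "c \<in> vecs n" and cP: "vecmatT n c (poly_mat n P (\<lambda>i j. emb (M i j))) = 0"
  have pe0: "poly_endo P uL c = 0" using cP vecmatT_poly_mat[OF cv] by simp
  have "\<forall>s. \<exists>f. s < m \<longrightarrow> (\<forall>i<t. f i \<in> V i) \<and> rowv n c s = (\<Sum>i<t. f i)"
  proof
    fix s
    have "\<exists>f. (\<forall>i. i \<ge> t \<longrightarrow> f i = 0) \<and> (\<forall>i<t. f i \<in> V i) \<and> rowv n c s = (\<Sum>i<t. f i)"
      using dsum rowv_vecs by blast
    then show "\<exists>f. s < m \<longrightarrow> (\<forall>i<t. f i \<in> V i) \<and> rowv n c s = (\<Sum>i<t. f i)" by blast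
  qed
  from choice[OF this] obtain fs where fs0: "\<forall>s. s < m \<longrightarrow> (\<forall>i<t. fs s i \<in> V i) \<and> rowv n c s = (\<Sum>i<t. fs s i)"
    by blast
  have fs: "(\<forall>i<t. fs s i \<in> V i) \<and> rowv n c s = (\<Sum>i<t. fs s i)" if "s < m" for s
    using fs0 that by blast
  have "\<forall>s. \<exists>g. \<forall>i. s < m \<and> i < t \<longrightarrow> g i \<in> vecs (dd i) \<and> fs s i = PS i (g i)"
  proof
    fix s
    have "\<forall>i. \<exists>a. s < m \<and> i < t \<longrightarrow> a \<in> vecs (dd i) \<and> fs s i = PS i a"
    proof
      fix i
      show "\<exists>a. s < m \<and> i < t \<longrightarrow> a \<in> vecs (dd i) \<and> fs s i = PS i a"
      proof (cases "s < m \<and> i < t")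
        case True
        then have "fs s i \<in> V i" using fs by blast
        then show ?thesis using blk_facts(8)[of i "fs s i"] True by blast
      qed blast
    qed
    then show "\<exists>g. \<forall>i. s < m \<and> i < t \<longrightarrow> g i \<in> vecs (dd i) \<and> fs s i = PS i (g i)"
      by (rule choice)
  qed
  from choice[OF this] obtain aa where aa0: "\<forall>s i. s < m \<and> i < t \<longrightarrow> aa s i \<in> vecs (dd i) \<and> fs s i = PS i (aa s i)"
    by blast
  have aa: "aa s i \<in> vecs (dd i) \<and> fs s i = PS i (aa s i)" if "s < m" "i < t" for s i
    using aa0 that by blast
  define e where "e i = (\<Sum>s<m. sc (b s) (embv (aa s i)))" for i
  have evec: "e i \<in> vecs (dd i)" if it: "i < t" for i
    unfolding e_def
  proof (rule vs.subspace_sum[OF vecs_subspace])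
    fix s assume "s \<in> {..<m}"
    then have "aa s i \<in> vecs (dd i)" using aa it by simp
    then show "sc (b s) (embv (aa s i)) \<in> vecs (dd i)"
      by (intro vs.subspace_scale[OF vecs_subspace] embv_vecs)
  qed
  have c_eq: "c = (\<Sum>i<t. FF i (e i))"
  proof -
    have "c = (\<Sum>s<m. sc (b s) (embv (rowv n c s)))" by (rule c_decomp[OF cv])
    also have "\<dots> = (\<Sum>s<m. sc (b s) (\<Sum>i<t. FF i (embv (aa s i))))"
    proof (rule sum.cong[OF refl])
      fix s assume "s \<in> {..<m}"
      then have sm: "s < m" by simp
      have "rowv n c s = (\<Sum>i<t. PS i (aa s i))"
        using fs[OF sm] by (auto intro!: sum.cong simp: aa[OF sm])
      then have "embv (rowv n c s) = (\<Sum>i<t. embv (PS i (aa s i)))" by (simp add: embv_sum)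
      also have "\<dots> = (\<Sum>i<t. FF i (embv (aa s i)))"
        by (rule sum.cong[OF refl]) (simp add: blk_facts(7))
      finally show "sc (b s) (embv (rowv n c s)) = sc (b s) (\<Sum>i<t. FF i (embv (aa s i)))" by simp
    qed
    also have "\<dots> = (\<Sum>s<m. \<Sum>i<t. FF i (sc (b s) (embv (aa s i))))"
    proof (rule sum.cong[OF refl])
      fix s
      have "sc (b s) (\<Sum>i<t. FF i (embv (aa s i))) = (\<Sum>i<t. sc (b s) (FF i (embv (aa s i))))"
        by (rule vs.scale_sum_right)
      also have "\<dots> = (\<Sum>i<t. FF i (sc (b s) (embv (aa s i))))"
        by (rule sum.cong[OF refl]) (simp add: module_hom.scale[OF blk_facts(1)])
      finally show "sc (b s) (\<Sum>i<t. FF i (embv (aa s i))) = (\<Sum>i<t. FF i (sc (b s) (embv (aa s i))))" .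
    qed
    also have "\<dots> = (\<Sum>i<t. \<Sum>s<m. FF i (sc (b s) (embv (aa s i))))" by (rule sum.swap)
    also have "\<dots> = (\<Sum>i<t. FF i (e i))"
    proof (rule sum.cong[OF refl])
      fix i assume "i \<in> {..<t}"
      then show "(\<Sum>s<m. FF i (sc (b s) (embv (aa s i)))) = FF i (e i)"
        unfolding e_def by (simp add: module_hom.sum[OF blk_facts(1)])
    qed
    finally show ?thesis .
  qed
  define x where "x i = coeffvec ((P * polyof (dd i) (e i)) mod TT i)" for i
  have xv: "\<forall>i<t. x i \<in> vecs (dd i)"
  proof (intro allI impI)
    fix i assume it: "i < t"
    have T0: "TT i \<noteq> 0" using blk_facts(11)[OF it] by auto
    show "x i \<in> vecs (dd i)" unfolding x_def
      by (rule coeffvec_vecs) (use mod_high[OF T0] blk_facts(12)[OF it] in simp)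
  qed
  have "poly_endo P uL c = (\<Sum>i<t. poly_endo P uL (FF i (e i)))"
    unfolding c_eq by (rule module_hom.sum[OF pe_hom[OF vecmatT_hom]])
  also have "\<dots> = (\<Sum>i<t. FF i (x i))"
    by (rule sum.cong[OF refl]) (simp add: blk_facts(9) x_def)
  finally have "(\<Sum>i<t. FF i (x i)) = poly_endo P uL c" by simp
  then have "(\<Sum>i<t. FF i (x i)) = 0" using pe0 by simp
  then have x0: "\<forall>i<t. x i = 0" using uniq xv by blast
  have "\<forall>i<t. FF i (e i) \<in> AA i"
  proof (intro allI impI)
    fix i assume it: "i < t"
    have "coeffvec ((P * polyof (dd i) (e i)) mod TT i) = coeffvec 0" using x0 it by (simp add: x_def)
    then have "(P * polyof (dd i) (e i)) mod TT i = 0" by (rule coeffvec_inj)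
    then have "e i \<in> CD i" using blk_facts(10)[OF it evec[OF it]] by simp
    then show "FF i (e i) \<in> AA i" unfolding AA_def by (rule imageI)
  qed
  then have "(\<forall>i<t. FF i (e i) \<in> AA i) \<and> c = (\<Sum>i<t. FF i (e i))" using c_eq by blast
  then show "c \<in> itsum AA t" unfolding itsum_repr by (rule exI[of _ "\<lambda>i. FF i (e i)"])
qed

end

context mainloc
begin

lemma CD_code: "i < t \<Longrightarrow> CD i = pcode.code (TT i) P \<and> pcode.d (TT i) = dd i \<and> pcode.e (TT i) P = degree (gcd P (TT i)) \<and> pcode (TT i)"
proof -
  assume it: "i < t"
  interpret pc: pcode "TT i" P by unfold_locales (rule blk_facts(11)[OF it])
  have "CD i = pc.code" by (simp add: CD_def pc.code_def pc.g_def pc.G_def)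
  moreover have "pc.d = dd i" by (simp add: pc.d_def blk_facts(12)[OF it])
  moreover have "pc.e = degree (gcd P (TT i))" by (simp add: pc.e_def pc.G_def)
  ultimately show ?thesis using pc.pcode_axioms by simp
qed

lemma CD_props:
  assumes it: "i < t"
  shows "vs.subspace (CD i)" "CD i \<subseteq> vecs (dd i)" "vs.dim (CD i) = degree (gcd P (TT i))"
proof -
  interpret pc: pcode "TT i" P using CD_code[OF it] by simp
  have e: "CD i = pc.code" "pc.d = dd i" "pc.e = degree (gcd P (TT i))" using CD_code[OF it] by simp_all
  show "vs.subspace (CD i)" using pc.code_subspace e by simp
  show "CD i \<subseteq> vecs (dd i)" using pc.code_vecs e by simp
  show "vs.dim (CD i) = degree (gcd P (TT i))" using pc.dim_code e by simp
qed

lemma AA_props: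
  assumes it: "i < t"
  shows "vs.subspace (AA i)" "AA i \<subseteq> Ext n (V i)" "vs.dim (AA i) = vs.dim (CD i)"
    "Mr emb b m n (AA i) r = Mr emb b m (dd i) (CD i) r"
proof -
  show "vs.subspace (AA i)" unfolding AA_def
    by (rule module_hom.subspace_image[OF blk_facts(1)[OF it] CD_props(1)[OF it]])
  show "AA i \<subseteq> Ext n (V i)" unfolding AA_def using blk_facts(15)[OF it] by blast
  show "vs.dim (AA i) = vs.dim (CD i)" unfolding AA_def
    by (rule vs.dim_inj_image[OF CD_props(1)[OF it] fdm_sub_vecs[OF CD_props(2)[OF it]]
          hom_lin_on[OF blk_facts(1)[OF it]] inj_on_subset[OF blk_facts(2)[OF it] CD_props(2)[OF it]]])
  have inj: "inj_on (kmap n (dd i) (blk.Aw n M (V i))) (vecs (dd i))"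
    using blk_facts(6)[OF it] blk_facts(14)[OF it] by simp
  show "Mr emb b m n (AA i) r = Mr emb b m (dd i) (CD i) r"
    unfolding AA_def blk_facts(13)[OF it] by (rule Mr_lmap[OF inj CD_props(1,2)[OF it]])
qed

lemma singleton:
  assumes it: "i < t" and r: "1 \<le> r" "r \<le> degree (gcd P (TT i))"
  shows "Mr emb b m (dd i) (CD i) r \<le> dd i - degree (gcd P (TT i)) + r"
proof -
  interpret pc: pcode "TT i" P using CD_code[OF it] by simp
  have e: "CD i = pc.code" "pc.d = dd i" "pc.e = degree (gcd P (TT i))" using CD_code[OF it] by simp_all
  have "r \<le> pc.e" using r e by simp
  from pc.singleton_sub[OF this] have D: "vs.subspace (pc.phi ` vecs r)" "pc.phi ` vecs r \<subseteq> CD i"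
    "vs.dim (pc.phi ` vecs r) = r" "pc.phi ` vecs r \<subseteq> vecs (dd i - degree (gcd P (TT i)) + r)"
    using e by auto
  have "Mr emb b m (dd i) (CD i) r \<le> wtR_sp emb b m (dd i) (pc.phi ` vecs r)"
    by (rule Mr_le[OF D(1,2,3)])
  also have "\<dots> \<le> dd i - degree (gcd P (TT i)) + r"
    unfolding wt_eq by (rule dim_le_vecs[OF RS_sub[OF D(4)]])
  finally show ?thesis .
qed

lemma Mr0: "Mr emb b m N X 0 = 0" by (simp add: Mr_def)

lemma gcd_deg0:
  assumes it: "i < t"
  shows "degree (gcd P (TT i)) = 0 \<longleftrightarrow> gcd P (TT i) = 1"
proof
  assume d0: "degree (gcd P (TT i)) = 0"
  have "TT i \<noteq> 0" using blk_facts(11)[OF it] by auto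
  then have nz: "gcd P (TT i) \<noteq> 0" by simp
  then have "is_unit (gcd P (TT i))" using is_unit_iff_degree[OF nz] d0 by simp
  then have "normalize (gcd P (TT i)) = 1" by (rule is_unit_normalize)
  then show "gcd P (TT i) = 1" by simp
qed simp

lemma deg_le_dd: "i < t \<Longrightarrow> degree (gcd P (TT i)) \<le> dd i"
proof -
  assume it: "i < t"
  have "TT i \<noteq> 0" using blk_facts(11)[OF it] by auto
  then have "degree (gcd P (TT i)) \<le> degree (TT i)" by (intro dvd_imp_degree_le) auto
  then show ?thesis using blk_facts(12)[OF it] by simp
qed

end

context mainloc
begin

lemma final_main:
  fixes \<Lambda> kk k
  defines "\<Lambda> \<equiv> {i. i < t \<and> gcd P (TT i) \<noteq> 1}"
    and "kk \<equiv> \<lambda>i. vs.dim (CD i)"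
    and "k \<equiv> vs.dim (itsum AA t)"
  shows "(\<forall>i<t. kk i = degree (gcd P (TT i)))
    \<and> (\<forall>i<t. \<forall>r\<in>{1..kk i}. Mr emb b m (dd i) (CD i) r \<le> dd i - degree (gcd P (TT i)) + r)
    \<and> k = (\<Sum>i\<in>\<Lambda>. degree (gcd P (TT i)))
    \<and> (\<forall>r\<in>{1..k}.
          Mr emb b m n (itsum AA t) r
            = Min ((\<lambda>rr. \<Sum>i\<in>\<Lambda>. Mr emb b m (dd i) (CD i) (rr i)) ` compositions \<Lambda> kk r)
        \<and> Min ((\<lambda>rr. \<Sum>i\<in>\<Lambda>. Mr emb b m (dd i) (CD i) (rr i)) ` compositions \<Lambda> kk r)
            \<le> Min ((\<lambda>rr. \<Sum>i\<in>{i\<in>\<Lambda>. rr i \<noteq> 0}. dd i - degree (gcd P (TT i))) ` compositions \<Lambda> kk r) + r)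
    \<and> (k \<ge> 1 \<longrightarrow> Mr emb b m n (itsum AA t) 1 = Min ((\<lambda>i. Mr emb b m (dd i) (CD i) 1) ` \<Lambda>))
    \<and> Mr emb b m n (itsum AA t) k = (\<Sum>i\<in>\<Lambda>. Mr emb b m (dd i) (CD i) (kk i))
    \<and> (\<Sum>i\<in>\<Lambda>. Mr emb b m (dd i) (CD i) (kk i)) \<le> (\<Sum>i\<in>\<Lambda>. dd i)"
proof -
  define f where "f rr = (\<Sum>i\<in>\<Lambda>. Mr emb b m (dd i) (CD i) (rr i))" for rr
  define Gd where "Gd i = degree (gcd P (TT i))" for i
  have Lt: "\<Lambda> \<subseteq> {..<t}" by (auto simp: \<Lambda>_def)
  have finL: "finite \<Lambda>" using Lt finite_subset by blast
  have kkG: "\<forall>i<t. kk i = Gd i" using CD_props(3) by (simp add: kk_def Gd_def)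
  have notL: "kk i = 0" if "i < t" "i \<notin> \<Lambda>" for i
    using that kkG gcd_deg0 by (auto simp: \<Lambda>_def Gd_def)
  have inL: "1 \<le> kk i" "i < t" if "i \<in> \<Lambda>" for i
    using that kkG gcd_deg0[of i] by (auto simp: \<Lambda>_def Gd_def)
  have sing: "Mr emb b m (dd i) (CD i) r \<le> dd i - Gd i + r" if "i < t" "1 \<le> r" "r \<le> kk i" for i r
    using singleton[of i r] that kkG by (simp add: Gd_def)
  have Gle: "Gd i \<le> dd i" if "i < t" for i using deg_le_dd that by (simp add: Gd_def)
  have U: "\<forall>i<t. vs.subspace (V i) \<and> V i \<subseteq> vecs n" by (rule V_sub)
  have A: "\<forall>i<t. vs.subspace (AA i) \<and> AA i \<subseteq> Ext n (V i)" using AA_props(1,2) by blast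
  note IT = iter[OF U A indep order_refl]
  have dimsum: "vs.dim (itsum AA t) = (\<Sum>i<t. vs.dim (AA i))" using IT by blast
  have ITle: "\<forall>rr. (\<forall>i<t. rr i \<le> vs.dim (AA i)) \<longrightarrow>
      Mr emb b m n (itsum AA t) (\<Sum>i<t. rr i) \<le> (\<Sum>i<t. Mr emb b m n (AA i) (rr i))" using IT by blast
  have ITge: "\<forall>r\<le>vs.dim (itsum AA t). \<exists>rr. (\<forall>i<t. rr i \<le> vs.dim (AA i)) \<and> (\<Sum>i<t. rr i) = r
      \<and> (\<Sum>i<t. Mr emb b m n (AA i) (rr i)) \<le> Mr emb b m n (itsum AA t) r" using IT by blast
  have dimAA: "vs.dim (AA i) = kk i" if "i < t" for i using AA_props(3)[OF that] by (simp add: kk_def)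
  have MrAA: "Mr emb b m n (AA i) r = Mr emb b m (dd i) (CD i) r" if "i < t" for i r
    using AA_props(4)[OF that] .
  have sumL: "(\<Sum>i<t. g i) = (\<Sum>i\<in>\<Lambda>. g i)" if "\<forall>i<t. i \<notin> \<Lambda> \<longrightarrow> g i = 0" for g :: "nat \<Rightarrow> nat"
    by (rule sum.mono_neutral_right) (use Lt that in auto)
  have k_eq: "k = (\<Sum>i\<in>\<Lambda>. kk i)"
  proof -
    have "k = (\<Sum>i<t. kk i)" unfolding k_def dimsum by (rule sum.cong) (auto simp: dimAA)
    also have "\<dots> = (\<Sum>i\<in>\<Lambda>. kk i)" by (rule sumL) (use notL in auto)
    finally show ?thesis .
  qed
  have k_eq2: "k = (\<Sum>i\<in>\<Lambda>. Gd i)" using k_eq kkG Lt by (auto intro!: sum.cong)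
  have kk_le_k: "kk i \<le> k" if "i \<in> \<Lambda>" for i
    unfolding k_eq by (rule member_le_sum) (use that finL in auto)
  have finC: "finite (compositions \<Lambda> kk r)" for r
  proof -
    have "compositions \<Lambda> kk r \<subseteq> {rr. \<forall>x. (x \<in> \<Lambda> \<longrightarrow> rr x \<in> {..k}) \<and> (x \<notin> \<Lambda> \<longrightarrow> rr x = 0)}"
      using kk_le_k by (force simp: compositions_def)
    moreover have "finite {rr. \<forall>x. (x \<in> \<Lambda> \<longrightarrow> rr x \<in> {..k}) \<and> (x \<notin> \<Lambda> \<longrightarrow> rr x = (0::nat))}"
      by (rule finite_set_of_finite_funs) (use finL in auto)
    ultimately show ?thesis using finite_subset by blast
  qed
  have conv: "(\<forall>i<t. rr i \<le> vs.dim (AA i)) \<and> (\<Sum>i<t. rr i) = r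
      \<and> (\<Sum>i<t. Mr emb b m n (AA i) (rr i)) = f rr" if rr: "rr \<in> compositions \<Lambda> kk r" for rr r
  proof -
    have z: "\<forall>i. i \<notin> \<Lambda> \<longrightarrow> rr i = 0" and le: "\<forall>i\<in>\<Lambda>. rr i \<le> kk i" and s: "(\<Sum>i\<in>\<Lambda>. rr i) = r"
      using rr by (auto simp: compositions_def)
    have "\<forall>i<t. rr i \<le> vs.dim (AA i)" using z le dimAA by (metis le0)
    moreover have "(\<Sum>i<t. rr i) = r" using sumL[of rr] z s by simp
    moreover have "(\<Sum>i<t. Mr emb b m n (AA i) (rr i)) = (\<Sum>i<t. Mr emb b m (dd i) (CD i) (rr i))"
      by (rule sum.cong) (auto simp: MrAA)
    moreover have "\<dots> = f rr" unfolding f_def by (rule sumL) (use z Mr0 in auto)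
    ultimately show ?thesis by simp
  qed
  have key: "Mr emb b m n (itsum AA t) r = Min (f ` compositions \<Lambda> kk r) \<and> compositions \<Lambda> kk r \<noteq> {}"
    if rk: "r \<le> k" for r
  proof -
    have lo: "Mr emb b m n (itsum AA t) r \<le> f rr" if "rr \<in> compositions \<Lambda> kk r" for rr
      using ITle conv[OF that] by metis
    obtain rr0 where rr0: "\<forall>i<t. rr0 i \<le> vs.dim (AA i)" "(\<Sum>i<t. rr0 i) = r"
      "(\<Sum>i<t. Mr emb b m n (AA i) (rr0 i)) \<le> Mr emb b m n (itsum AA t) r"
      using ITge rk k_def by blast
    define rr1 where "rr1 i = (if i \<in> \<Lambda> then rr0 i else 0)" for i
    have rr0z: "rr0 i = 0" if "i < t" "i \<notin> \<Lambda>" for i using rr0(1) that dimAA notL by fastforce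
    have "(\<Sum>i\<in>\<Lambda>. rr1 i) = (\<Sum>i<t. rr0 i)"
    proof -
      have "(\<Sum>i\<in>\<Lambda>. rr1 i) = (\<Sum>i\<in>\<Lambda>. rr0 i)" by (rule sum.cong) (auto simp: rr1_def)
      also have "\<dots> = (\<Sum>i<t. rr0 i)" by (rule sumL[symmetric]) (use rr0z in auto)
      finally show ?thesis .
    qed
    then have c1: "rr1 \<in> compositions \<Lambda> kk r"
      using rr0(1,2) dimAA Lt by (auto simp: compositions_def rr1_def)
    have "f rr1 = (\<Sum>i<t. Mr emb b m n (AA i) (rr1 i))" using conv[OF c1] by simp
    also have "\<dots> = (\<Sum>i<t. Mr emb b m n (AA i) (rr0 i))"
      by (rule sum.cong) (auto simp: rr1_def rr0z)
    finally have f1: "f rr1 \<le> Mr emb b m n (itsum AA t) r" using rr0(3) by simp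
    have ne: "f ` compositions \<Lambda> kk r \<noteq> {}" using c1 by blast
    have "Min (f ` compositions \<Lambda> kk r) \<le> f rr1" using c1 finC by (intro Min_le) auto
    moreover have "Mr emb b m n (itsum AA t) r \<le> Min (f ` compositions \<Lambda> kk r)"
      using finC ne lo by (intro Min.boundedI) auto
    ultimately show ?thesis using f1 c1 by auto
  qed
  have c4: "Min (f ` compositions \<Lambda> kk r)
      \<le> Min ((\<lambda>rr. \<Sum>i\<in>{i\<in>\<Lambda>. rr i \<noteq> 0}. dd i - Gd i) ` compositions \<Lambda> kk r) + r"
    if rk: "r \<le> k" for r
  proof -
    let ?g = "\<lambda>rr. \<Sum>i\<in>{i\<in>\<Lambda>. rr i \<noteq> 0}. dd i - Gd i"
    have ne: "compositions \<Lambda> kk r \<noteq> {}" using key[OF rk] by blast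
    have "Min (?g ` compositions \<Lambda> kk r) \<in> ?g ` compositions \<Lambda> kk r"
      using finC ne by (intro Min_in) auto
    then obtain rr where rr: "rr \<in> compositions \<Lambda> kk r" "?g rr = Min (?g ` compositions \<Lambda> kk r)" by auto
    have z: "\<forall>i\<in>\<Lambda>. rr i \<le> kk i" and s: "(\<Sum>i\<in>\<Lambda>. rr i) = r" using rr(1) by (auto simp: compositions_def)
    have "f rr \<le> (\<Sum>i\<in>\<Lambda>. (if rr i = 0 then 0 else dd i - Gd i) + rr i)"
      unfolding f_def
    proof (rule sum_mono)
      fix i assume iL: "i \<in> \<Lambda>"
      show "Mr emb b m (dd i) (CD i) (rr i) \<le> (if rr i = 0 then 0 else dd i - Gd i) + rr i"
      proof (cases "rr i = 0")
        case True then show ?thesis by (simp add: Mr0)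
      next
        case False
        then show ?thesis using sing[of i "rr i"] inL(2)[OF iL] z iL by simp
      qed
    qed
    also have "\<dots> = (\<Sum>i\<in>\<Lambda>. (if rr i = 0 then 0 else dd i - Gd i)) + r"
      using s by (simp add: sum.distrib)
    also have "(\<Sum>i\<in>\<Lambda>. (if rr i = 0 then 0 else dd i - Gd i)) = ?g rr"
      using finL by (simp add: sum.inter_filter if_not_P cong: if_cong) (rule sum.cong; auto)
    finally have "f rr \<le> ?g rr + r" .
    moreover have "Min (f ` compositions \<Lambda> kk r) \<le> f rr" using rr(1) finC by (intro Min_le) auto
    ultimately show ?thesis using rr(2) by simp
  qed
  have c5: "Mr emb b m n (itsum AA t) 1 = Min ((\<lambda>i. Mr emb b m (dd i) (CD i) 1) ` \<Lambda>)" if k1: "k \<ge> 1"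
  proof -
    have delta: "f (\<lambda>j. if j = i then x else 0) = Mr emb b m (dd i) (CD i) x" if "i \<in> \<Lambda>" for i x
    proof -
      have "f (\<lambda>j. if j = i then x else 0) = (\<Sum>j\<in>\<Lambda>. if j = i then Mr emb b m (dd i) (CD i) x else 0)"
        unfolding f_def by (rule sum.cong) (auto simp: Mr0)
      also have "\<dots> = Mr emb b m (dd i) (CD i) x" using that finL by simp
      finally show ?thesis .
    qed
    have "f ` compositions \<Lambda> kk 1 = (\<lambda>i. Mr emb b m (dd i) (CD i) 1) ` \<Lambda>"
    proof
      show "f ` compositions \<Lambda> kk 1 \<subseteq> (\<lambda>i. Mr emb b m (dd i) (CD i) 1) ` \<Lambda>"
      proof
        fix y assume "y \<in> f ` compositions \<Lambda> kk 1"
        then obtain rr where rr: "rr \<in> compositions \<Lambda> kk 1" "y = f rr" by auto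
        have z: "\<forall>i. i \<notin> \<Lambda> \<longrightarrow> rr i = 0" and s: "(\<Sum>i\<in>\<Lambda>. rr i) = 1"
          using rr(1) by (auto simp: compositions_def)
        obtain i where i: "i \<in> \<Lambda>" "rr i \<noteq> 0"
        proof (rule ccontr)
          assume "\<not> thesis"
          then have "\<forall>i\<in>\<Lambda>. rr i = 0" using that by blast
          then have "(\<Sum>i\<in>\<Lambda>. rr i) = 0" by simp
          then show False using s by simp
        qed
        have "rr i \<le> 1" using member_le_sum[of i \<Lambda> rr] i(1) finL s by simp
        then have ri: "rr i = 1" using i(2) by simp
        have oth: "rr j = 0" if "j \<noteq> i" for j
        proof (cases "j \<in> \<Lambda>")
          case True
          have "rr i + rr j = (\<Sum>l\<in>{i, j}. rr l)" using that by simp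
          also have "\<dots> \<le> (\<Sum>l\<in>\<Lambda>. rr l)" by (rule sum_mono2) (use finL True i(1) in auto)
          finally show ?thesis using s ri by simp
        qed (use z in auto)
        have "rr = (\<lambda>j. if j = i then 1 else 0)" using ri oth by auto
        then have "y = Mr emb b m (dd i) (CD i) 1" using rr(2) delta[OF i(1)] by simp
        then show "y \<in> (\<lambda>i. Mr emb b m (dd i) (CD i) 1) ` \<Lambda>" using i(1) by blast
      qed
      show "(\<lambda>i. Mr emb b m (dd i) (CD i) 1) ` \<Lambda> \<subseteq> f ` compositions \<Lambda> kk 1"
      proof
        fix y assume "y \<in> (\<lambda>i. Mr emb b m (dd i) (CD i) 1) ` \<Lambda>"
        then obtain i where i: "i \<in> \<Lambda>" "y = Mr emb b m (dd i) (CD i) 1" by auto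
        have "(\<lambda>j. if j = i then 1 else 0) \<in> compositions \<Lambda> kk 1"
          using inL[OF i(1)] i(1) finL by (auto simp: compositions_def)
        moreover have "y = f (\<lambda>j. if j = i then 1 else 0)" using delta[OF i(1)] i(2) by simp
        ultimately show "y \<in> f ` compositions \<Lambda> kk 1" by blast
      qed
    qed
    then show ?thesis using key[OF k1] by simp
  qed
  have c6: "Mr emb b m n (itsum AA t) k = (\<Sum>i\<in>\<Lambda>. Mr emb b m (dd i) (CD i) (kk i))"
  proof -
    define kk' where "kk' i = (if i \<in> \<Lambda> then kk i else 0)" for i
    have "compositions \<Lambda> kk k = {kk'}"
    proof
      show "compositions \<Lambda> kk k \<subseteq> {kk'}"
      proof
        fix rr assume rr: "rr \<in> compositions \<Lambda> kk k"
        have z: "\<forall>i. i \<notin> \<Lambda> \<longrightarrow> rr i = 0" and le: "\<forall>i\<in>\<Lambda>. rr i \<le> kk i" and s: "(\<Sum>i\<in>\<Lambda>. rr i) = k"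
          using rr by (auto simp: compositions_def)
        have "rr i = kk i" if "i \<in> \<Lambda>" for i
          by (rule sum_mono_inv[of rr \<Lambda> kk]) (use s k_eq le that finL in auto)
        then have "rr = kk'" using z by (auto simp: kk'_def)
        then show "rr \<in> {kk'}" by simp
      qed
      show "{kk'} \<subseteq> compositions \<Lambda> kk k"
        using k_eq by (auto simp: compositions_def kk'_def intro!: sum.cong)
    qed
    moreover have "f kk' = (\<Sum>i\<in>\<Lambda>. Mr emb b m (dd i) (CD i) (kk i))"
      unfolding f_def by (rule sum.cong) (auto simp: kk'_def)
    ultimately show ?thesis using key[of k] by simp
  qed
  have c7: "(\<Sum>i\<in>\<Lambda>. Mr emb b m (dd i) (CD i) (kk i)) \<le> (\<Sum>i\<in>\<Lambda>. dd i)"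
  proof (rule sum_mono)
    fix i assume iL: "i \<in> \<Lambda>"
    have it: "i < t" using inL(2)[OF iL] .
    have "Mr emb b m (dd i) (CD i) (kk i) \<le> dd i - Gd i + kk i" using sing[OF it inL(1)[OF iL] order_refl] .
    also have "\<dots> = dd i" using kkG it Gle[OF it] by simp
    finally show "Mr emb b m (dd i) (CD i) (kk i) \<le> dd i" .
  qed
  have ff: "(\<lambda>rr. \<Sum>i\<in>\<Lambda>. Mr emb b m (dd i) (CD i) (rr i)) = f" by (simp add: f_def fun_eq_iff)
  have gg: "(\<lambda>rr. \<Sum>i\<in>{i\<in>\<Lambda>. rr i \<noteq> 0}. dd i - degree (gcd P (TT i)))
      = (\<lambda>rr. \<Sum>i\<in>{i\<in>\<Lambda>. rr i \<noteq> 0}. dd i - Gd i)" by (simp add: Gd_def)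
  show ?thesis
  proof (intro conjI)
    show "\<forall>i<t. kk i = degree (gcd P (TT i))" using kkG by (simp add: Gd_def)
    show "\<forall>i<t. \<forall>r\<in>{1..kk i}. Mr emb b m (dd i) (CD i) r \<le> dd i - degree (gcd P (TT i)) + r"
    proof (intro allI impI ballI)
      fix i r assume it: "i < t" and r: "r \<in> {1..kk i}"
      show "Mr emb b m (dd i) (CD i) r \<le> dd i - degree (gcd P (TT i)) + r"
        using sing[OF it] r by (simp add: Gd_def)
    qed
    show "k = (\<Sum>i\<in>\<Lambda>. degree (gcd P (TT i)))" using k_eq2 by (simp add: Gd_def)
    show "\<forall>r\<in>{1..k}.
          Mr emb b m n (itsum AA t) r
            = Min ((\<lambda>rr. \<Sum>i\<in>\<Lambda>. Mr emb b m (dd i) (CD i) (rr i)) ` compositions \<Lambda> kk r)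
        \<and> Min ((\<lambda>rr. \<Sum>i\<in>\<Lambda>. Mr emb b m (dd i) (CD i) (rr i)) ` compositions \<Lambda> kk r)
            \<le> Min ((\<lambda>rr. \<Sum>i\<in>{i\<in>\<Lambda>. rr i \<noteq> 0}. dd i - degree (gcd P (TT i))) ` compositions \<Lambda> kk r) + r"
    proof
      fix r assume "r \<in> {1..k}"
      then have rk: "r \<le> k" by simp
      show "Mr emb b m n (itsum AA t) r
            = Min ((\<lambda>rr. \<Sum>i\<in>\<Lambda>. Mr emb b m (dd i) (CD i) (rr i)) ` compositions \<Lambda> kk r)
        \<and> Min ((\<lambda>rr. \<Sum>i\<in>\<Lambda>. Mr emb b m (dd i) (CD i) (rr i)) ` compositions \<Lambda> kk r)
            \<le> Min ((\<lambda>rr. \<Sum>i\<in>{i\<in>\<Lambda>. rr i \<noteq> 0}. dd i - degree (gcd P (TT i))) ` compositions \<Lambda> kk r) + r"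
        unfolding ff gg using key[OF rk] c4[OF rk] by simp
    qed
    show "k \<ge> 1 \<longrightarrow> Mr emb b m n (itsum AA t) 1 = Min ((\<lambda>i. Mr emb b m (dd i) (CD i) 1) ` \<Lambda>)"
      using c5 by blast
    show "Mr emb b m n (itsum AA t) k = (\<Sum>i\<in>\<Lambda>. Mr emb b m (dd i) (CD i) (kk i))" by (rule c6)
    show "(\<Sum>i\<in>\<Lambda>. Mr emb b m (dd i) (CD i) (kk i)) \<le> (\<Sum>i\<in>\<Lambda>. dd i)" by (rule c7)
  qed
qed

end

theorem theorem3:
  fixes emb :: "'k::field \<Rightarrow> 'l::field_gcd"
    and b :: "nat \<Rightarrow> 'l" and m n t :: nat
    and M :: "nat \<Rightarrow> nat \<Rightarrow> 'k"
    and V :: "nat \<Rightarrow> (nat \<Rightarrow> 'k) set"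
    and \<Theta> :: "nat \<Rightarrow> 'k poly"
    and P :: "'l poly"
  assumes emb: "field_emb emb"
    and basis: "is_K_basis emb b m"
    and n_pos: "n \<ge> 1" and mn: "m \<ge> n"
    and V_sub: "\<forall>i<t. module.subspace sc (V i) \<and> V i \<subseteq> vecs n"
    and dsum: "\<forall>v\<in>vecs n. \<exists>!f. (\<forall>i. i \<ge> t \<longrightarrow> f i = 0) \<and> (\<forall>i<t. f i \<in> V i)
                                \<and> v = (\<Sum>i<t. f i)"
    and inv: "\<forall>i<t. (\<lambda>v. vecmatT n v M) ` V i \<subseteq> V i"
    and cyc: "\<forall>i<t. cyclic_endo (V i) (\<lambda>v. vecmatT n v M)"
    and minp: "\<forall>i<t. is_min_poly (V i) (\<lambda>v. vecmatT n v M) (\<Theta> i)"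
  defines "G \<equiv> \<lambda>i. gcd P (map_poly emb (\<Theta> i))"
    and "CC \<equiv> {c \<in> vecs n. vecmatT n c (poly_mat n P (\<lambda>i j. emb (M i j))) = 0}"
    and "Ci \<equiv> \<lambda>i. poly_code (map_poly emb (\<Theta> i)) (map_poly emb (\<Theta> i) div gcd P (map_poly emb (\<Theta> i)))"
    and "\<Lambda> \<equiv> {i. i < t \<and> gcd P (map_poly emb (\<Theta> i)) \<noteq> 1}"
    and "kk \<equiv> \<lambda>i. vector_space.dim (sc :: 'l \<Rightarrow> _) (poly_code (map_poly emb (\<Theta> i)) (map_poly emb (\<Theta> i) div gcd P (map_poly emb (\<Theta> i))))"
    and "k \<equiv> vector_space.dim (sc :: 'l \<Rightarrow> _) {c \<in> vecs n. vecmatT n c (poly_mat n P (\<lambda>i j. emb (M i j))) = 0}"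
    and "d \<equiv> \<lambda>i. degree (\<Theta> i)"
  shows "(\<forall>i<t. kk i = degree (G i))
    \<and> (\<forall>i<t. \<forall>r\<in>{1..kk i}. Mr emb b m (d i) (Ci i) r \<le> d i - degree (G i) + r)
    \<and> k = (\<Sum>i\<in>\<Lambda>. degree (G i))
    \<and> (\<forall>r\<in>{1..k}.
          Mr emb b m n CC r
            = Min ((\<lambda>rr. \<Sum>i\<in>\<Lambda>. Mr emb b m (d i) (Ci i) (rr i)) ` compositions \<Lambda> kk r)
        \<and> Min ((\<lambda>rr. \<Sum>i\<in>\<Lambda>. Mr emb b m (d i) (Ci i) (rr i)) ` compositions \<Lambda> kk r)
            \<le> Min ((\<lambda>rr. \<Sum>i\<in>{i\<in>\<Lambda>. rr i \<noteq> 0}. d i - degree (G i)) ` compositions \<Lambda> kk r) + r)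
    \<and> (k \<ge> 1 \<longrightarrow> Mr emb b m n CC 1 = Min ((\<lambda>i. Mr emb b m (d i) (Ci i) 1) ` \<Lambda>))
    \<and> Mr emb b m n CC k = (\<Sum>i\<in>\<Lambda>. Mr emb b m (d i) (Ci i) (kk i))
    \<and> (\<Sum>i\<in>\<Lambda>. Mr emb b m (d i) (Ci i) (kk i)) \<le> (\<Sum>i\<in>\<Lambda>. d i)"
  proof -
  interpret kb emb b m by unfold_locales (rule emb, rule basis)
  interpret Q: mainloc emb b m n t M V \<Theta> P
    by unfold_locales (use V_sub dsum inv cyc minp in auto)
  show ?thesis
    unfolding G_def CC_def Ci_def \<Lambda>_def kk_def k_def d_def
    using Q.final_main unfolding Q.CC_eq[symmetric] Q.CD_def Q.TT_def Q.dd_def .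
qed

end
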